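(* Let $V$ be a simple Yetter-Drinfeld module over $H=B(n,w,\gamma)$ with $\dim_\Bbbk V=p+1$ for some $p\ge0$, and let $v\in V$ be a standard element of type $(\alpha,\beta,x^rg^i)$ with $\alpha,\beta\in\Bbbk^*$, $r,i\in\mathbb{Z}$. (1) If $\beta^n\ne1$, then $p=n-1$; moreover $c_\beta^{r,i}(k,0)\ne0$ for all $0\le k\le n$ and $c_\beta^{r,i}(n,l)=0$ for all $1\le l\le n-1$. (2) If $\beta^n=1$, write $\beta=\gamma^j$ with $j\in\mathbb{Z}$. Then $p=n-\phi(-i-j)$; moreover $c_\beta^{r,i}(k,0)\ne0$ for all $0\le k\le p$, and $c_\beta^{r,i}(p+1,l)=0$ for all $0\le l\le p$ (while $c_\beta^{r,i}(p+1,p+1)\neq 0$).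
   Context: $\Bbbk$ is an algebraically closed field of characteristic $0$; $n,w$ positive integers, $\gamma$ a primitive $n$-th root of unity. $H=B(n,w,\gamma)$ is the Hopf algebra generated by $x^{\pm1},g,y$ with relations $xx^{-1}=x^{-1}x=1$, $xg=gx$, $xy=yx$, $yg=\gamma gy$, $y^n=1-x^w=1-g^n$, with $\Delta(x)=x\otimes x$, $\Delta(g)=g\otimes g$, $\Delta(y)=y\otimes g+1\otimes y$, $\varepsilon(x)=\varepsilon(g)=1$, $\varepsilon(y)=0$, $S(x)=x^{-1}$, $S(g)=g^{-1}$, $S(y)=-yg^{-1}$; $G(H)=\{g^jx^k\}$. A (left-left) Yetter-Drinfeld module is a left $H$-module, left $H$-comodule $(V,\cdot,\delta)$ with $\delta(h\cdot v)=h_{(1)}v_{(-1)}S(h_{(3)})\otimes h_{(2)}\cdot v_{(0)}$; simple means no nonzero proper Yetter-Drinfeld submodules. A nonzero $v\in V$ is a standard element of type $(\alpha,\beta,h)$ if $h\in G(H)$, $\alpha,\beta\in\Bbbk^*$, $x\cdot v=\alpha v$, $g\cdot v=\beta v$, $\delta(v)=h\otimes v$. The elements $c_\beta^{r,i}(k,l)\in H$ ($0\le l\le k$) are defined by $c_\beta^{r,i}(0,0)=x^rg^i$ and, for $k\ge0$: $c_\beta^{r,i}(k+1,0)=c_\beta^{r,i}(k,0)S(y)+\beta yc_\beta^{r,i}(k,0)S(g)$; for $0<l<k+1$, $c_\beta^{r,i}(k+1,l)=c_\beta^{r,i}(k,l)S(y)+\beta\gamma^{-l}yc_\beta^{r,i}(k,l)S(g)+c_\beta^{r,i}(k,l-1)S(g)$;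 $c_\beta^{r,i}(k+1,k+1)=c_\beta^{r,i}(k,k)S(g)$. For $i\in\mathbb{Z}$, $\phi(i)$ is the unique integer in $\{1,\dots,n\}$ with $i\equiv\phi(i)\pmod n$. *)

theory Defs
  imports "HOL-Computational_Algebra.Polynomial"
begin

definition alg_closed_field :: "'k::field itself \<Rightarrow> bool" where
  "alg_closed_field _ \<longleftrightarrow> (\<forall>q::'k poly. 0 < degree q \<longrightarrow> (\<exists>z. poly q z = 0))"

definition primitive_root :: "nat \<Rightarrow> 'k::field \<Rightarrow> bool" where
  "primitive_root n \<gamma> \<longleftrightarrow> \<gamma> ^ n = 1 \<and> (\<forall>m. 0 < m \<and> m < n \<longrightarrow> \<gamma> ^ m \<noteq> 1)"

section \<open>The Hopf algebra H = B(n,w,gamma), realised on its PBW basis\<close>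

text \<open>The index (k,a,b) stands for the basis monomial x^k g^a y^b with k an integer,
  0 <= a < n and 0 <= b < n.  An element of H is a finitely supported coefficient
  function on such indices; H (x) H and H (x) H (x) H are treated likewise.\<close>

type_synonym idx = "int \<times> nat \<times> nat"
type_synonym 'k helt = "idx \<Rightarrow> 'k"
type_synonym 'k telt = "idx \<times> idx \<Rightarrow> 'k"
type_synonym 'k t3elt = "idx \<times> idx \<times> idx \<Rightarrow> 'k"

definition fsupp :: "('a \<Rightarrow> 'b::zero) \<Rightarrow> 'a set" where
  "fsupp f = {p. f p \<noteq> 0}"

definition valid_idx :: "nat \<Rightarrow> idx \<Rightarrow> bool" where
  "valid_idx n p \<longleftrightarrow> fst (snd p) < n \<and> snd (snd p) < n"

definition in_H :: "nat \<Rightarrow> 'k::zero helt \<Rightarrow> bool" where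
  "in_H n f \<longleftrightarrow> finite (fsupp f) \<and> (\<forall>p\<in>fsupp f. valid_idx n p)"

definition hbasis :: "idx \<Rightarrow> 'k::{zero,one} helt" where
  "hbasis p = (\<lambda>q. if q = p then 1 else 0)"

definition hzero :: "'k::zero helt" where "hzero = (\<lambda>_. 0)"

definition hadd :: "'k::plus helt \<Rightarrow> 'k helt \<Rightarrow> 'k helt" where
  "hadd f g = (\<lambda>d. f d + g d)"

definition hsmult :: "'k::times \<Rightarrow> 'k helt \<Rightarrow> 'k helt" where
  "hsmult c f = (\<lambda>d. c * f d)"

text \<open>Normal form of the (not necessarily reduced) monomial x^k g^a y^b, using
  g^n = x^w and y^n = 1 - x^w (both central).\<close>

function red :: "nat \<Rightarrow> nat \<Rightarrow> int \<Rightarrow> nat \<Rightarrow> nat \<Rightarrow> 'k::ring_1 helt" where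
  "red n w k a b =
     (if n = 0 then hbasis (k, a, b)
      else if n \<le> b then (\<lambda>q. red n w k a (b - n) q - red n w (k + int w) a (b - n) q)
      else if n \<le> a then red n w (k + int w) (a - n) b
      else hbasis (k, a, b))"
  by pat_completeness auto
termination by (relation "measure (\<lambda>(n, w, k, a, b). a + b)") auto

text \<open>Product of basis monomials:
  (x^k g^a y^b)(x^k' g^a' y^b') = gamma^(b a') x^(k+k') g^(a+a') y^(b+b').\<close>

definition bmul :: "nat \<Rightarrow> nat \<Rightarrow> 'k::field \<Rightarrow> idx \<Rightarrow> idx \<Rightarrow> 'k helt" where
  "bmul n w \<gamma> p q = (case p of (k, a, b) \<Rightarrow> case q of (k', a', b') \<Rightarrow>
      (\<lambda>d. \<gamma> ^ (b * a') * red n w (k + k') (a + a') (b + b') d))"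

definition hmul :: "nat \<Rightarrow> nat \<Rightarrow> 'k::field \<Rightarrow> 'k helt \<Rightarrow> 'k helt \<Rightarrow> 'k helt" where
  "hmul n w \<gamma> f g = (\<lambda>d. \<Sum>p\<in>fsupp f. \<Sum>q\<in>fsupp g. f p * g q * bmul n w \<gamma> p q d)"

definition hone :: "'k::{zero,one} helt" where "hone = hbasis (0, 0, 0)"

definition hpow :: "nat \<Rightarrow> nat \<Rightarrow> 'k::field \<Rightarrow> 'k helt \<Rightarrow> nat \<Rightarrow> 'k helt" where
  "hpow n w \<gamma> f m = ((hmul n w \<gamma> f) ^^ m) hone"

definition hzpow :: "nat \<Rightarrow> nat \<Rightarrow> 'k::field \<Rightarrow> 'k helt \<Rightarrow> 'k helt \<Rightarrow> int \<Rightarrow> 'k helt" where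
  "hzpow n w \<gamma> f finv z = (if 0 \<le> z then hpow n w \<gamma> f (nat z) else hpow n w \<gamma> finv (nat (- z)))"

text \<open>The generators x, x^-1, g, g^-1 (= x^-w g^(n-1)), y.\<close>
definition xH :: "'k::ring_1 helt" where "xH = hbasis (1, 0, 0)"
definition xinvH :: "'k::ring_1 helt" where "xinvH = hbasis (-1, 0, 0)"
definition gH :: "nat \<Rightarrow> nat \<Rightarrow> 'k::ring_1 helt" where "gH n w = red n w 0 1 0"
definition ginvH :: "nat \<Rightarrow> nat \<Rightarrow> 'k::ring_1 helt" where
  "ginvH n w = red n w (- int w) (n - 1) 0"
definition yH :: "nat \<Rightarrow> nat \<Rightarrow> 'k::ring_1 helt" where "yH n w = red n w 0 0 1"

definition xgH :: "nat \<Rightarrow> nat \<Rightarrow> 'k::field \<Rightarrow> int \<Rightarrow> int \<Rightarrow> 'k helt" where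
  "xgH n w \<gamma> r i = hmul n w \<gamma> (hzpow n w \<gamma> xH xinvH r) (hzpow n w \<gamma> (gH n w) (ginvH n w) i)"

definition grouplikes :: "nat \<Rightarrow> nat \<Rightarrow> 'k::field \<Rightarrow> 'k helt set" where
  "grouplikes n w \<gamma> =
     {hmul n w \<gamma> (hzpow n w \<gamma> (gH n w) (ginvH n w) j) (hzpow n w \<gamma> xH xinvH k) | j k. True}"

definition tens :: "'k::times helt \<Rightarrow> 'k helt \<Rightarrow> 'k telt" where
  "tens f g = (\<lambda>(p, q). f p * g q)"

definition tmul :: "nat \<Rightarrow> nat \<Rightarrow> 'k::field \<Rightarrow> 'k telt \<Rightarrow> 'k telt \<Rightarrow> 'k telt" where
  "tmul n w \<gamma> F G = (\<lambda>(d1, d2). \<Sum>P\<in>fsupp F. \<Sum>Q\<in>fsupp G.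
      F P * G Q * bmul n w \<gamma> (fst P) (fst Q) d1 * bmul n w \<gamma> (snd P) (snd Q) d2)"

definition tpow :: "nat \<Rightarrow> nat \<Rightarrow> 'k::field \<Rightarrow> 'k telt \<Rightarrow> nat \<Rightarrow> 'k telt" where
  "tpow n w \<gamma> F m = ((tmul n w \<gamma> F) ^^ m) (tens hone hone)"

definition tzpow :: "nat \<Rightarrow> nat \<Rightarrow> 'k::field \<Rightarrow> 'k telt \<Rightarrow> 'k telt \<Rightarrow> int \<Rightarrow> 'k telt" where
  "tzpow n w \<gamma> F Finv z = (if 0 \<le> z then tpow n w \<gamma> F (nat z) else tpow n w \<gamma> Finv (nat (- z)))"

text \<open>Delta(x) = x(x)x, Delta(g) = g(x)g, Delta(y) = y(x)g + 1(x)y, extended multiplicatively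
  to the basis monomials x^k g^a y^b and then linearly.\<close>
definition Delta_basis :: "nat \<Rightarrow> nat \<Rightarrow> 'k::field \<Rightarrow> idx \<Rightarrow> 'k telt" where
  "Delta_basis n w \<gamma> p = (case p of (k, a, b) \<Rightarrow>
     tmul n w \<gamma>
       (tmul n w \<gamma> (tzpow n w \<gamma> (tens xH xH) (tens xinvH xinvH) k) (tpow n w \<gamma> (tens (gH n w) (gH n w)) a))
       (tpow n w \<gamma> (\<lambda>pq. tens (yH n w) (gH n w) pq + tens hone (yH n w) pq) b))"

definition Delta :: "nat \<Rightarrow> nat \<Rightarrow> 'k::field \<Rightarrow> 'k helt \<Rightarrow> 'k telt" where
  "Delta n w \<gamma> f = (\<lambda>pq. \<Sum>p\<in>fsupp f. f p * Delta_basis n w \<gamma> p pq)"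

text \<open>(Delta (x) id) Delta, i.e. h |-> h_(1) (x) h_(2) (x) h_(3).\<close>
definition Delta3 :: "nat \<Rightarrow> nat \<Rightarrow> 'k::field \<Rightarrow> 'k helt \<Rightarrow> 'k t3elt" where
  "Delta3 n w \<gamma> f = (\<lambda>(b1, b2, b3). \<Sum>q\<in>fsupp (Delta n w \<gamma> f).
      if snd q = b3 then Delta n w \<gamma> f q * Delta_basis n w \<gamma> (fst q) (b1, b2) else 0)"

definition eps_basis :: "idx \<Rightarrow> 'k::field" where
  "eps_basis p = (case p of (k, a, b) \<Rightarrow> (0::'k) ^ b)"

definition counit :: "'k::field helt \<Rightarrow> 'k" where
  "counit f = (\<Sum>p\<in>fsupp f. f p * eps_basis p)"

text \<open>S(x) = x^-1, S(g) = g^-1, S(y) = - y g^-1; S is an anti-homomorphism, so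
  S(x^k g^a y^b) = S(y)^b S(g)^a S(x)^k; extended linearly.\<close>
definition S_basis :: "nat \<Rightarrow> nat \<Rightarrow> 'k::field \<Rightarrow> idx \<Rightarrow> 'k helt" where
  "S_basis n w \<gamma> p = (case p of (k, a, b) \<Rightarrow>
     hmul n w \<gamma>
       (hmul n w \<gamma> (hpow n w \<gamma> (\<lambda>d. - hmul n w \<gamma> (yH n w) (ginvH n w) d) b) (hpow n w \<gamma> (ginvH n w) a))
       (hzpow n w \<gamma> xinvH xH k))"

definition antipode :: "nat \<Rightarrow> nat \<Rightarrow> 'k::field \<Rightarrow> 'k helt \<Rightarrow> 'k helt" where
  "antipode n w \<gamma> f = (\<lambda>d. \<Sum>p\<in>fsupp f. f p * S_basis n w \<gamma> p d)"

text \<open>A module structure is given by the action rho p of each basis monomial p;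
  h . v = sum_p h(p) rho p v.  A comodule structure is given by the coordinate maps
  delta p, where delta(v) = sum_p e_p (x) delta p v.\<close>

definition Hact :: "('k::field \<Rightarrow> 'v \<Rightarrow> 'v) \<Rightarrow> (idx \<Rightarrow> 'v \<Rightarrow> 'v::ab_group_add) \<Rightarrow> 'k helt \<Rightarrow> 'v \<Rightarrow> 'v" where
  "Hact sc \<rho> f v = (\<Sum>p\<in>fsupp f. sc (f p) (\<rho> p v))"

definition YD_module :: "nat \<Rightarrow> nat \<Rightarrow> 'k::field \<Rightarrow> ('k \<Rightarrow> 'v \<Rightarrow> 'v) \<Rightarrow>
    (idx \<Rightarrow> 'v \<Rightarrow> 'v::ab_group_add) \<Rightarrow> (idx \<Rightarrow> 'v \<Rightarrow> 'v) \<Rightarrow> bool" where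
  "YD_module n w \<gamma> sc \<rho> \<delta> \<longleftrightarrow>
     vector_space sc \<and>
     \<comment> \<open>left H-module\<close>
     (\<forall>p. Vector_Spaces.linear sc sc (\<rho> p)) \<and>
     (\<forall>v. Hact sc \<rho> hone v = v) \<and>
     (\<forall>f g v. in_H n f \<longrightarrow> in_H n g \<longrightarrow>
        Hact sc \<rho> (hmul n w \<gamma> f g) v = Hact sc \<rho> f (Hact sc \<rho> g v)) \<and>
     \<comment> \<open>left H-comodule, delta : V -> H (x) V\<close>
     (\<forall>p. Vector_Spaces.linear sc sc (\<delta> p)) \<and>
     (\<forall>p v. \<not> valid_idx n p \<longrightarrow> \<delta> p v = 0) \<and>
     (\<forall>v. finite {p. \<delta> p v \<noteq> 0}) \<and>
     (\<forall>v. (\<Sum>p\<in>{p. \<delta> p v \<noteq> 0}. sc (counit (hbasis p)) (\<delta> p v)) = v) \<and>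
     (\<forall>v p1 p2. (\<Sum>p\<in>{p. \<delta> p v \<noteq> 0}. sc (Delta n w \<gamma> (hbasis p) (p1, p2)) (\<delta> p v))
                 = \<delta> p2 (\<delta> p1 v)) \<and>
     \<comment> \<open>Yetter-Drinfeld compatibility:
        delta(h.v) = h_(1) v_(-1) S(h_(3)) (x) h_(2).v_(0)\<close>
     (\<forall>f v d. in_H n f \<longrightarrow>
        \<delta> d (Hact sc \<rho> f v) =
          (\<Sum>t\<in>fsupp (Delta3 n w \<gamma> f). \<Sum>c\<in>{c. \<delta> c v \<noteq> 0}.
             (case t of (b1, b2, b3) \<Rightarrow>
               sc (Delta3 n w \<gamma> f t *
                   hmul n w \<gamma> (hmul n w \<gamma> (hbasis b1) (hbasis c)) (antipode n w \<gamma> (hbasis b3)) d)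
                  (\<rho> b2 (\<delta> c v)))))"

definition YD_simple :: "nat \<Rightarrow> nat \<Rightarrow> 'k::field \<Rightarrow> ('k \<Rightarrow> 'v \<Rightarrow> 'v) \<Rightarrow>
    (idx \<Rightarrow> 'v \<Rightarrow> 'v::ab_group_add) \<Rightarrow> (idx \<Rightarrow> 'v \<Rightarrow> 'v) \<Rightarrow> bool" where
  "YD_simple n w \<gamma> sc \<rho> \<delta> \<longleftrightarrow>
     YD_module n w \<gamma> sc \<rho> \<delta> \<and>
     (\<forall>W. module.subspace sc W \<and>
          (\<forall>f. in_H n f \<longrightarrow> (\<forall>u\<in>W. Hact sc \<rho> f u \<in> W)) \<and>
          (\<forall>p. \<forall>u\<in>W. \<delta> p u \<in> W)
        \<longrightarrow> W = {0} \<or> W = UNIV)"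

definition standard_elem :: "nat \<Rightarrow> nat \<Rightarrow> 'k::field \<Rightarrow> ('k \<Rightarrow> 'v \<Rightarrow> 'v) \<Rightarrow>
    (idx \<Rightarrow> 'v \<Rightarrow> 'v::ab_group_add) \<Rightarrow> (idx \<Rightarrow> 'v \<Rightarrow> 'v) \<Rightarrow> 'v \<Rightarrow> 'k \<Rightarrow> 'k \<Rightarrow> 'k helt \<Rightarrow> bool" where
  "standard_elem n w \<gamma> sc \<rho> \<delta> v \<alpha> \<beta> h \<longleftrightarrow>
     v \<noteq> 0 \<and> h \<in> grouplikes n w \<gamma> \<and> \<alpha> \<noteq> 0 \<and> \<beta> \<noteq> 0 \<and>
     Hact sc \<rho> xH v = sc \<alpha> v \<and> Hact sc \<rho> (gH n w) v = sc \<beta> v \<and>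
     (\<forall>p. \<delta> p v = sc (h p) v)"

fun cc :: "nat \<Rightarrow> nat \<Rightarrow> 'k::field \<Rightarrow> 'k \<Rightarrow> int \<Rightarrow> int \<Rightarrow> nat \<Rightarrow> nat \<Rightarrow> 'k helt" where
  "cc n w \<gamma> \<beta> r i 0 l = (if l = 0 then xgH n w \<gamma> r i else hzero)"
| "cc n w \<gamma> \<beta> r i (Suc k) l =
     (let Sy = antipode n w \<gamma> (yH n w); Sg = antipode n w \<gamma> (gH n w); y = yH n w in
      if l = 0 then
        hadd (hmul n w \<gamma> (cc n w \<gamma> \<beta> r i k 0) Sy)
             (hsmult \<beta> (hmul n w \<gamma> (hmul n w \<gamma> y (cc n w \<gamma> \<beta> r i k 0)) Sg))
      else if l < Suc k then
        hadd (hadd (hmul n w \<gamma> (cc n w \<gamma> \<beta> r i k l) Sy)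
                   (hsmult (\<beta> * inverse (\<gamma> ^ l)) (hmul n w \<gamma> (hmul n w \<gamma> y (cc n w \<gamma> \<beta> r i k l)) Sg)))
             (hmul n w \<gamma> (cc n w \<gamma> \<beta> r i k (l - 1)) Sg)
      else if l = Suc k then hmul n w \<gamma> (cc n w \<gamma> \<beta> r i k k) Sg
      else hzero)"

definition phi :: "nat \<Rightarrow> int \<Rightarrow> int" where
  "phi n i = (THE m. 1 \<le> m \<and> m \<le> int n \<and> i mod int n = m mod int n)"

end

theory Submission
  imports Defs
begin


fun qb :: "'a::comm_ring_1 \<Rightarrow> nat \<Rightarrow> nat \<Rightarrow> 'a" where
  "qb Q k 0 = 1"
| "qb Q 0 (Suc l) = 0"
| "qb Q (Suc k) (Suc l) = Q^(Suc l) * qb Q k (Suc l) + qb Q k l"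

lemma qb_gt: "k < l \<Longrightarrow> qb Q k l = 0"
proof (induction k arbitrary: l)
  case 0 then show ?case by (cases l) auto
next
  case (Suc k) then show ?case by (cases l) auto
qed

lemma qb_diag[simp]: "qb Q k k = 1"
  by (induction k) (auto simp: qb_gt)

lemma qb_pascal2: "qb Q (Suc k) (Suc l) = qb Q k (Suc l) + Q^(k - l) * qb Q k l"
proof (induction k arbitrary: l)
  case 0 then show ?case by (cases l) auto
next
  case (Suc k)
  show ?case
  proof (cases l)
    case 0
    then show ?thesis using Suc.IH[of 0] by (simp add: algebra_simps)
  next
    case (Suc l')
    have A: "qb Q (Suc (Suc k)) (Suc l) = Q^(Suc l) * (qb Q k (Suc l) + Q^(k - l) * qb Q k l) + (qb Q k l + Q^(k-l') * qb Q k l')"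
      using Suc.IH[of l] Suc.IH[of l'] Suc by simp
    have B: "qb Q (Suc k) (Suc l) + Q^(Suc k - l) * qb Q (Suc k) l
         = (Q^(Suc l) * qb Q k (Suc l) + qb Q k l) + Q^(Suc k - l) * (Q^l * qb Q k l + qb Q k l')"
      using Suc by simp
    show ?thesis
    proof (cases "l \<le> k")
      case True
      have "Suc l + (k-l) = (Suc k - l) + l" using True by simp
      then have e1: "Q^(Suc l) * Q^(k-l) = Q^(Suc k - l) * Q^l"
        by (metis power_add)
      have e2: "k - l' = Suc k - l" using Suc by simp
      show ?thesis unfolding A B e2 using e1 by (simp add: algebra_simps)
    next
      case False
      then have "qb Q k l = 0" by (simp add: qb_gt)
      moreover have "k - l' = Suc k - l" using Suc by simp
      ultimately show ?thesis unfolding A B by (simp add: algebra_simps)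
    qed
  qed
qed

fun tri :: "nat \<Rightarrow> nat" where "tri 0 = 0" | "tri (Suc m) = tri m + Suc m"

definition lam :: "'a::field \<Rightarrow> 'a \<Rightarrow> nat \<Rightarrow> nat \<Rightarrow> 'a" where
  "lam Q c k l = (if l \<le> k then Q^(tri (k-l)) * qb Q k l * (\<Prod>s\<in>{l..<k}. c * Q^s - 1) else 0)"

lemma lam_diag: "lam Q c k k = 1"
  by (simp add: lam_def)

lemma lam_rec0: "lam Q c (Suc k) 0 = Q^(Suc k) * (c * Q^k - 1) * lam Q c k 0"
  by (simp add: lam_def prod.atLeastLessThan_Suc power_add algebra_simps)

lemma lam_rec:
  assumes "0 < l" "l \<le> k"
  shows "lam Q c (Suc k) l = Q^(Suc k - l) * ((c * Q^(k+l) - 1) * lam Q c k l + lam Q c k (l-1))"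
proof -
  obtain l' where l: "l = Suc l'" using assms by (cases l) auto
  let ?P = "\<Prod>s\<in>{l..<k}. c * Q^s - 1"
  have P1: "(\<Prod>s\<in>{l..<Suc k}. c * Q^s - 1) = ?P * (c * Q^k - 1)"
    using assms by (simp add: prod.atLeastLessThan_Suc)
  have P2: "(\<Prod>s\<in>{l'..<k}. c * Q^s - 1) = (c * Q^l' - 1) * ?P"
    using assms l by (simp add: prod.atLeast_Suc_lessThan)
  have t1: "tri (Suc k - l) = tri (k - l) + (Suc k - l)"
    using assms by (simp add: Suc_diff_le)
  have t2: "tri (k - l') = tri (k - l) + (Suc k - l)"
  proof -
    have "k - l' = Suc (k-l)" "Suc k - l = Suc (k - l)" using assms l by simp_all
    then show ?thesis by simp
  qed
  have G1: "qb Q (Suc k) l = Q^l * qb Q k l + qb Q k l'" using l by simp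
  have G2: "qb Q (Suc k) l = qb Q k l + Q^(Suc k - l) * qb Q k l'" using l qb_pascal2[of Q k l'] by simp
  have key: "qb Q (Suc k) l * (c * Q^k - 1) = (c * Q^(k+l) - 1) * qb Q k l + Q^(Suc k - l) * (c * Q^l' - 1) * qb Q k l'"
  proof -
    have e: "Q^(Suc k - l) * Q^l' = Q^k" using assms l by (simp flip: power_add)
    have "qb Q (Suc k) l * (c * Q^k - 1) = c * Q^k * qb Q (Suc k) l - qb Q (Suc k) l" by (simp add: algebra_simps)
    also have "\<dots> = c * Q^k * (Q^l * qb Q k l + qb Q k l') - (qb Q k l + Q^(Suc k - l) * qb Q k l')"
      by (subst G1, subst G2) (rule refl)
    also have "\<dots> = (c * Q^(k+l) - 1) * qb Q k l + Q^(Suc k - l) * (c * Q^l' - 1) * qb Q k l'"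
      using e by (simp add: algebra_simps power_add)
    finally show ?thesis .
  qed
  have t1': "Q^(tri (Suc k - l)) = Q^(tri (k-l)) * Q^(Suc k - l)" by (simp only: t1 power_add)
  have t2': "Q^(tri (k - l')) = Q^(tri (k-l)) * Q^(Suc k - l)" by (simp only: t2 power_add)
  have c1: "l \<le> Suc k" "l \<le> k" "l' \<le> k" using assms l by auto
  have "lam Q c (Suc k) l = Q^(tri (Suc k - l)) * qb Q (Suc k) l * (\<Prod>s\<in>{l..<Suc k}. c * Q^s - 1)"
    unfolding lam_def if_P[OF c1(1)] ..
  also have "\<dots> = Q^(tri (k-l)) * Q^(Suc k - l) * ?P * (qb Q (Suc k) l * (c * Q^k - 1))"
    unfolding t1' P1 by (simp only: mult_ac)
  also have "\<dots> = Q^(tri (k-l)) * Q^(Suc k - l) * ?P * ((c * Q^(k+l) - 1) * qb Q k l + Q^(Suc k - l) * (c * Q^l' - 1) * qb Q k l')"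
    unfolding key ..
  also have "\<dots> = Q^(Suc k - l) * ((c * Q^(k+l) - 1) * (Q^(tri (k-l)) * qb Q k l * ?P) + (Q^(tri (k - l')) * qb Q k l' * (\<Prod>s\<in>{l'..<k}. c * Q^s - 1)))"
    unfolding t2' P2 by (simp only: algebra_simps)
  also have "\<dots> = Q^(Suc k - l) * ((c * Q^(k+l) - 1) * lam Q c k l + lam Q c k (l-1))"
    unfolding lam_def if_P[OF c1(2)] using l c1 by simp
  finally show ?thesis .
qed

lemma qb_sym: "(Q^(Suc l) - 1) * qb Q k (Suc l) = (Q^(k - l) - 1) * qb Q k l"
proof -
  have "Q^(Suc l) * qb Q k (Suc l) + qb Q k l = qb Q k (Suc l) + Q^(k - l) * qb Q k l"
    using qb_pascal2[of Q k l] by simp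
  then show ?thesis by (simp add: algebra_simps)
qed

lemma qb_root:
  fixes Q :: "'a::field"
  assumes "Q^n = 1" "\<And>l. 0 < l \<Longrightarrow> l < n \<Longrightarrow> Q^l \<noteq> 1"
  shows "0 < l \<Longrightarrow> l < n \<Longrightarrow> qb Q n l = 0"
proof (induction l)
  case 0 then show ?case by simp
next
  case (Suc l)
  have "(Q^(Suc l) - 1) * qb Q n (Suc l) = (Q^(n - l) - 1) * qb Q n l" by (rule qb_sym)
  also have "\<dots> = 0"
  proof (cases l)
    case 0 then show ?thesis using assms(1) by simp
  next
    case (Suc l') then show ?thesis using Suc.IH Suc.prems by simp
  qed
  finally show ?case using assms(2)[of "Suc l"] Suc.prems by simp
qed

lemma lam_zero0_iff:
  fixes Q :: "'a::field"
  assumes "Q \<noteq> 0"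
  shows "lam Q c k 0 = 0 \<longleftrightarrow> (\<exists>s<k. c * Q^s = 1)"
  using assms by (auto simp: lam_def)

lemma lam_zero_factor:
  fixes Q :: "'a::field"
  assumes "l \<le> s" "s < k" "c * Q^s = 1"
  shows "lam Q c k l = 0"
proof -
  have "s \<in> {l..<k}" using assms by simp
  then have "(\<Prod>s\<in>{l..<k}. c * Q^s - 1) = 0" using assms(3)
    by (metis (no_types, lifting) finite_atLeastLessThan prod_zero_iff right_minus_eq)
  then show ?thesis by (simp add: lam_def)
qed



declare red.simps[simp del]

definition fin :: "('a \<Rightarrow> 'b::zero) \<Rightarrow> bool" where "fin f \<longleftrightarrow> finite (fsupp f)"

lemma fsupp_hbasis[simp]: "fsupp (hbasis p :: 'a::zero_neq_one helt) = {p}"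
  by (auto simp: fsupp_def hbasis_def)

lemma fin_hbasis[simp]: "fin (hbasis p :: 'a::zero_neq_one helt)"
  by (simp add: fin_def)

lemma fin_diff: "fin f \<Longrightarrow> fin g \<Longrightarrow> fin (\<lambda>q. f q - (g q :: 'a::ab_group_add))"
  unfolding fin_def fsupp_def by (rule finite_subset[of _ "{p. f p \<noteq> 0} \<union> {p. g p \<noteq> 0}"]) auto

lemma fin_add: "fin f \<Longrightarrow> fin g \<Longrightarrow> fin (\<lambda>q. f q + (g q :: 'a::ab_group_add))"
  unfolding fin_def fsupp_def by (rule finite_subset[of _ "{p. f p \<noteq> 0} \<union> {p. g p \<noteq> 0}"]) auto

lemma fin_smult: "fin f \<Longrightarrow> fin (\<lambda>q. c * (f q :: 'a::field))"
  unfolding fin_def fsupp_def by (rule finite_subset[of _ "{p. f p \<noteq> 0}"]) auto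

lemma fin_zero[simp]: "fin (\<lambda>q. 0)"
  unfolding fin_def fsupp_def by simp

lemma red_valid: "0<n \<Longrightarrow> a<n \<Longrightarrow> b<n \<Longrightarrow> red n w k a b = hbasis (k,a,b)"
  by (subst red.simps) simp

lemma red_bge: "0<n \<Longrightarrow> n \<le> b \<Longrightarrow>
   red n w k a b = (\<lambda>q. red n w k a (b-n) q - red n w (k+int w) a (b-n) q)"
  by (subst red.simps) simp

lemma red_age: "0<n \<Longrightarrow> b<n \<Longrightarrow> n \<le> a \<Longrightarrow> red n w k a b = red n w (k+int w) (a-n) b"
  by (subst red.simps) simp

lemma red_age_gen: "0<n \<Longrightarrow> n \<le> a \<Longrightarrow> red n w k a b = (red n w (k+int w) (a-n) b :: 'a::ring_1 helt)"
proof (induction b arbitrary: k rule: less_induct)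
  case (less b)
  show ?case
  proof (cases "n \<le> b")
    case True
    have "b - n < b" using less.prems True by simp
    then show ?thesis using less True
      by (simp add: red_bge[of n b] algebra_simps)
  next
    case False
    then show ?thesis using less.prems red_age[of n b a w k] by simp
  qed
qed


lemma red_fin_valid: assumes n0: "0<n" shows "fin (red n w k a b :: 'a::ring_1 helt) \<and> (\<forall>d. (red n w k a b :: 'a helt) d \<noteq> 0 \<longrightarrow> valid_idx n d)"
proof (induction "a+b" arbitrary: k a b rule: less_induct)
  case less
  note IH = less.hyps
  show ?case
  proof (cases "n \<le> b")
    case True
    have lt: "a + (b-n) < a + b" using n0 True by simp
    note ih1 = IH[OF lt, of k] and ih2 = IH[OF lt, of "k + int w"]
    have e: "red n w k a b = (\<lambda>q. (red n w k a (b-n) :: 'a helt) q - red n w (k+int w) a (b-n) q)"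
      using red_bge[OF n0 True] .
    have f: "fin (red n w k a b :: 'a helt)" unfolding e using ih1 ih2 fin_diff by blast
    have v: "\<forall>dd. (red n w k a b :: 'a helt) dd \<noteq> 0 \<longrightarrow> valid_idx n dd"
    proof (intro allI impI)
      fix dd assume "(red n w k a b :: 'a helt) dd \<noteq> 0"
      then have "(red n w k a (b-n) :: 'a helt) dd \<noteq> 0 \<or> (red n w (k+int w) a (b-n) :: 'a helt) dd \<noteq> 0"
        using e by (metis diff_self)
      then show "valid_idx n dd" using ih1 ih2 by blast
    qed
    show ?thesis using f v by blast
  next
    case False
    show ?thesis
    proof (cases "n \<le> a")
      case True
      have "(a-n) + b < a + b" using n0 True by simp
      have e2: "red n w k a b = red n w (k+int w) (a-n) b" using red_age[OF n0, of b a w k] False True by simp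
      show ?thesis unfolding e2 by (rule IH) fact
    next
      case F2: False
      have ab: "a < n" "b < n" using False F2 by auto
      show ?thesis unfolding red_valid[OF n0 ab] using ab
        by (auto simp: hbasis_def valid_idx_def fin_def fsupp_def)
    qed
  qed
qed

lemma red_fin: "0<n \<Longrightarrow> fin (red n w k a b :: 'a::ring_1 helt)"
  using red_fin_valid by blast

lemma red_supp_valid: "0<n \<Longrightarrow> (red n w k a b :: 'a::ring_1 helt) d \<noteq> 0 \<Longrightarrow> valid_idx n d"
  using red_fin_valid by blast

lemma hmul_expand:
  assumes "finite A" "fsupp f \<subseteq> A" "finite B" "fsupp g \<subseteq> B"
  shows "hmul n w \<gamma> f g d = (\<Sum>p\<in>A. \<Sum>q\<in>B. f p * g q * bmul n w \<gamma> p q d)"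
proof -
  have "hmul n w \<gamma> f g d = (\<Sum>p\<in>fsupp f. \<Sum>q\<in>fsupp g. f p * g q * bmul n w \<gamma> p q d)"
    by (simp add: hmul_def)
  also have "\<dots> = (\<Sum>p\<in>A. \<Sum>q\<in>fsupp g. f p * g q * bmul n w \<gamma> p q d)"
    by (rule sum.mono_neutral_left) (use assms in \<open>auto simp: fsupp_def\<close>)
  also have "\<dots> = (\<Sum>p\<in>A. \<Sum>q\<in>B. f p * g q * bmul n w \<gamma> p q d)"
    by (rule sum.cong[OF refl], rule sum.mono_neutral_left) (use assms in \<open>auto simp: fsupp_def\<close>)
  finally show ?thesis .
qed

lemma fsupp_diff_sub: "fsupp (\<lambda>q. f q - (g q::'a::ab_group_add)) \<subseteq> fsupp f \<union> fsupp g"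
  by (auto simp: fsupp_def)
lemma fsupp_add_sub: "fsupp (\<lambda>q. f q + (g q::'a::ab_group_add)) \<subseteq> fsupp f \<union> fsupp g"
  by (auto simp: fsupp_def)
lemma fsupp_smult_sub: "fsupp (\<lambda>q. c * (f q::'a::field)) \<subseteq> fsupp f"
  by (auto simp: fsupp_def)

lemma hmul_diff_left:
  assumes "fin f" "fin f'" "fin g"
  shows "hmul n w \<gamma> (\<lambda>d. f d - f' d) g = (\<lambda>d. hmul n w \<gamma> f g d - hmul n w \<gamma> f' g d)"
proof
  fix d
  let ?A = "fsupp f \<union> fsupp f'" and ?B = "fsupp g"
  have fA: "finite ?A" "finite ?B" using assms by (auto simp: fin_def)
  show "hmul n w \<gamma> (\<lambda>d. f d - f' d) g d = hmul n w \<gamma> f g d - hmul n w \<gamma> f' g d"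
    using fA fsupp_diff_sub[of f f']
    by (simp add: hmul_expand[of ?A _ ?B] sum_subtractf[symmetric] algebra_simps)
qed

lemma hmul_add_left:
  assumes "fin f" "fin f'" "fin g"
  shows "hmul n w \<gamma> (\<lambda>d. f d + f' d) g = (\<lambda>d. hmul n w \<gamma> f g d + hmul n w \<gamma> f' g d)"
proof
  fix d
  let ?A = "fsupp f \<union> fsupp f'" and ?B = "fsupp g"
  have fA: "finite ?A" "finite ?B" using assms by (auto simp: fin_def)
  show "hmul n w \<gamma> (\<lambda>d. f d + f' d) g d = hmul n w \<gamma> f g d + hmul n w \<gamma> f' g d"
    using fA fsupp_add_sub[of f f']
    by (simp add: hmul_expand[of ?A _ ?B] sum.distrib[symmetric] algebra_simps)
qed

lemma hmul_smult_left:
  assumes "fin f" "fin g"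
  shows "hmul n w \<gamma> (\<lambda>d. c * f d) g = (\<lambda>d. c * hmul n w \<gamma> f g d)"
proof
  fix d
  let ?A = "fsupp f" and ?B = "fsupp g"
  have fA: "finite ?A" "finite ?B" using assms by (auto simp: fin_def)
  show "hmul n w \<gamma> (\<lambda>d. c * f d) g d = c * hmul n w \<gamma> f g d"
    using fA fsupp_smult_sub[of c f]
    by (simp add: hmul_expand[of ?A _ ?B] sum_distrib_left algebra_simps)
qed

lemma hmul_diff_right:
  assumes "fin f" "fin g" "fin g'"
  shows "hmul n w \<gamma> f (\<lambda>d. g d - g' d) = (\<lambda>d. hmul n w \<gamma> f g d - hmul n w \<gamma> f g' d)"
proof
  fix d
  let ?A = "fsupp f" and ?B = "fsupp g \<union> fsupp g'"
  have fA: "finite ?A" "finite ?B" using assms by (auto simp: fin_def)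
  show "hmul n w \<gamma> f (\<lambda>d. g d - g' d) d = hmul n w \<gamma> f g d - hmul n w \<gamma> f g' d"
    using fA fsupp_diff_sub[of g g']
    by (simp add: hmul_expand[of ?A _ ?B] sum_subtractf[symmetric] algebra_simps)
qed

lemma hmul_add_right:
  assumes "fin f" "fin g" "fin g'"
  shows "hmul n w \<gamma> f (\<lambda>d. g d + g' d) = (\<lambda>d. hmul n w \<gamma> f g d + hmul n w \<gamma> f g' d)"
proof
  fix d
  let ?A = "fsupp f" and ?B = "fsupp g \<union> fsupp g'"
  have fA: "finite ?A" "finite ?B" using assms by (auto simp: fin_def)
  show "hmul n w \<gamma> f (\<lambda>d. g d + g' d) d = hmul n w \<gamma> f g d + hmul n w \<gamma> f g' d"
    using fA fsupp_add_sub[of g g']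
    by (simp add: hmul_expand[of ?A _ ?B] sum.distrib[symmetric] algebra_simps)
qed

lemma hmul_smult_right:
  assumes "fin f" "fin g"
  shows "hmul n w \<gamma> f (\<lambda>d. c * g d) = (\<lambda>d. c * hmul n w \<gamma> f g d)"
proof
  fix d
  let ?A = "fsupp f" and ?B = "fsupp g"
  have fA: "finite ?A" "finite ?B" using assms by (auto simp: fin_def)
  show "hmul n w \<gamma> f (\<lambda>d. c * g d) d = c * hmul n w \<gamma> f g d"
    using fA fsupp_smult_sub[of c g]
    by (simp add: hmul_expand[of ?A _ ?B] sum_distrib_left algebra_simps)
qed

lemma hmul_hbasis: "hmul n w \<gamma> (hbasis p) (hbasis q) = bmul n w \<gamma> p q"
  by (rule ext) (simp only: hmul_def fsupp_hbasis, simp add: hbasis_def)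

lemma fin_hmul:
  assumes n0: "0<n" and "fin f" "fin g"
  shows "fin (hmul n w \<gamma> f g)"
proof -
  let ?S = "\<Union>p\<in>fsupp f. \<Union>q\<in>fsupp g. fsupp (red n w (fst p + fst q) (fst (snd p) + fst (snd q)) (snd (snd p) + snd (snd q)) :: 'a helt)"
  have "finite ?S" using assms red_fin[OF n0] by (auto simp: fin_def)
  moreover have "fsupp (hmul n w \<gamma> f g) \<subseteq> ?S"
  proof
    fix d assume "d \<in> fsupp (hmul n w \<gamma> f g)"
    then have "(\<Sum>p\<in>fsupp f. \<Sum>q\<in>fsupp g. f p * g q * bmul n w \<gamma> p q d) \<noteq> 0"
      by (simp add: fsupp_def hmul_def)
    then obtain p q where pf: "p \<in> fsupp f" "q \<in> fsupp g" and b: "bmul n w \<gamma> p q d \<noteq> 0"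
      by (metis (no_types, lifting) mult_zero_right sum.neutral)
    obtain k a b k' a' b' where pq: "p = (k,a,b)" "q = (k',a',b')" by (cases p; cases q) auto
    with b have "(red n w (k+k') (a+a') (b+b') :: 'a helt) d \<noteq> 0" by (simp add: bmul_def)
    then have "d \<in> fsupp (red n w (fst p + fst q) (fst (snd p) + fst (snd q)) (snd (snd p) + snd (snd q)) :: 'a helt)"
      using pq by (simp add: fsupp_def)
    then show "d \<in> ?S" using pf by blast
  qed
  ultimately show ?thesis by (simp add: fin_def finite_subset)
qed

lemma hmul_valid:
  assumes n0: "0<n" and "hmul n w \<gamma> f g d \<noteq> 0"
  shows "valid_idx n d"
proof -
  from assms have "(\<Sum>p\<in>fsupp f. \<Sum>q\<in>fsupp g. f p * g q * bmul n w \<gamma> p q d) \<noteq> 0"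
    by (simp add: fsupp_def hmul_def)
  then obtain p q where pq: "bmul n w \<gamma> p q d \<noteq> 0"
    by (metis (no_types, lifting) mult_zero_right sum.neutral)
  obtain k a b k' a' b' where "p = (k,a,b)" "q = (k',a',b')" by (cases p; cases q) auto
  with pq have "(red n w (k+k') (a+a') (b+b') :: 'a helt) d \<noteq> 0" by (simp add: bmul_def)
  then show ?thesis by (rule red_supp_valid[OF n0])
qed

lemma pow_mod_n: assumes "(\<gamma>::'a::comm_ring_1)^n = 1" shows "\<gamma>^(x + n*y) = \<gamma>^x"
  by (simp add: power_add power_mult assms)

lemma hmul_red_hbasis:
  assumes n0: "0<n" and g: "(\<gamma>::'k::field)^n = 1" and v: "a' < n" "b' < n"
  shows "hmul n w \<gamma> (red n w k a b) (hbasis (k',a',b')) = (\<lambda>d. \<gamma>^(b*a') * red n w (k+k') (a+a') (b+b') d)"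
proof (induction "a+b" arbitrary: k a b rule: less_induct)
  case less
  note IH = less.hyps
  show ?case
  proof (cases "n \<le> b")
    case True
    have lt: "a + (b-n) < a + b" using n0 True by simp
    have e: "red n w k a b = (\<lambda>q. (red n w k a (b-n) :: 'k helt) q - red n w (k+int w) a (b-n) q)"
      using red_bge[OF n0 True] .
    have e2: "red n w (k+k') (a+a') (b+b') = (\<lambda>q. (red n w (k+k') (a+a') (b-n+b') :: 'k helt) q - red n w (k+k'+int w) (a+a') (b-n+b') q)"
      using red_bge[OF n0, of "b+b'" w "k+k'" "a+a'"] True by (simp add: algebra_simps)
    have gg: "\<gamma>^(b*a') = \<gamma>^((b-n)*a')"
      using pow_mod_n[OF g, of "(b-n)*a'" a'] True by (simp add: algebra_simps)
    show ?thesis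
      unfolding e hmul_diff_left[OF red_fin[OF n0] red_fin[OF n0] fin_hbasis] IH[OF lt] e2 gg
      by (simp add: algebra_simps)
  next
    case False
    show ?thesis
    proof (cases "n \<le> a")
      case True
      have lt: "(a-n) + b < a + b" using n0 True by simp
      have e: "red n w k a b = (red n w (k+int w) (a-n) b :: 'k helt)" using red_age[OF n0, of b a w k] False True by simp
      have e2: "red n w (k+k') (a+a') (b+b') = (red n w (k+k'+int w) (a+a'-n) (b+b') :: 'k helt)"
        using red_age_gen[OF n0, of "a+a'" w "k+k'" "b+b'"] True by simp
      show ?thesis unfolding e IH[OF lt] e2 using True by (simp add: algebra_simps)
    next
      case F2: False
      have ab: "a < n" "b < n" using False F2 by auto
      show ?thesis unfolding red_valid[OF n0 ab] hmul_hbasis by (simp add: bmul_def)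
    qed
  qed
qed

lemma hmul_red:
  assumes n0: "0<n" and g: "(\<gamma>::'k::field)^n = 1"
  shows "hmul n w \<gamma> (red n w k a b) (red n w k' a' b') = (\<lambda>d. \<gamma>^(b*a') * red n w (k+k') (a+a') (b+b') d)"
proof (induction "a'+b'" arbitrary: k' a' b' rule: less_induct)
  case less
  note IH = less.hyps
  show ?case
  proof (cases "n \<le> b'")
    case True
    have lt: "a' + (b'-n) < a' + b'" using n0 True by simp
    have e: "red n w k' a' b' = (\<lambda>q. (red n w k' a' (b'-n) :: 'k helt) q - red n w (k'+int w) a' (b'-n) q)"
      using red_bge[OF n0 True] .
    have e2: "red n w (k+k') (a+a') (b+b') = (\<lambda>q. (red n w (k+k') (a+a') (b+(b'-n)) :: 'k helt) q - red n w (k+(k'+int w)) (a+a') (b+(b'-n)) q)"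
      using red_bge[OF n0, of "b+b'" w "k+k'" "a+a'"] True by (simp add: algebra_simps)
    show ?thesis
      unfolding e hmul_diff_right[OF red_fin[OF n0] red_fin[OF n0] red_fin[OF n0]] IH[OF lt] e2
      by (simp add: algebra_simps)
  next
    case False
    show ?thesis
    proof (cases "n \<le> a'")
      case True
      have lt: "(a'-n) + b' < a' + b'" using n0 True by simp
      have e: "red n w k' a' b' = (red n w (k'+int w) (a'-n) b' :: 'k helt)" using red_age[OF n0, of b' a' w k'] False True by simp
      have e2: "red n w (k+k') (a+a') (b+b') = (red n w (k+(k'+int w)) (a+(a'-n)) (b+b') :: 'k helt)"
        using red_age_gen[OF n0, of "a+a'" w "k+k'" "b+b'"] True by (simp add: algebra_simps)
      have gg: "\<gamma>^(b*a') = \<gamma>^(b*(a'-n))"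
        using pow_mod_n[OF g, of "b*(a'-n)" b] True by (simp add: algebra_simps)
      show ?thesis unfolding e IH[OF lt] e2 gg by simp
    next
      case F2: False
      have ab: "a' < n" "b' < n" using False F2 by auto
      show ?thesis unfolding red_valid[OF n0 ab] by (rule hmul_red_hbasis[OF n0 g ab])
    qed
  qed
qed

lemma red_lead:
  assumes n0: "0<n" and w0: "0<w"
  shows "(red n w k a b :: 'a::ring_1 helt) (k + int w * int (a div n), a mod n, b mod n) = 1 \<and>
         (\<forall>k2 a2 b2. k2 < k + int w * int (a div n) \<longrightarrow> (red n w k a b :: 'a helt) (k2,a2,b2) = 0)"
proof (induction "a+b" arbitrary: k a b rule: less_induct)
  case less
  note IH = less.hyps
  show ?case
  proof (cases "n \<le> b")
    case True
    have lt: "a + (b-n) < a + b" using n0 True by simp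
    note ih1 = IH[OF lt, of k] and ih2 = IH[OF lt, of "k + int w"]
    have e: "red n w k a b = (\<lambda>q. (red n w k a (b-n) :: 'a helt) q - red n w (k+int w) a (b-n) q)"
      using red_bge[OF n0 True] .
    have bm: "(b - n) mod n = b mod n" using True by (simp add: mod_if)
    show ?thesis unfolding e using ih1 ih2 w0 bm by auto
  next
    case False
    show ?thesis
    proof (cases "n \<le> a")
      case True
      have lt: "(a-n) + b < a + b" using n0 True by simp
      have e2: "red n w k a b = red n w (k+int w) (a-n) b" using red_age[OF n0, of b a w k] False True by simp
      have d: "a div n = Suc ((a-n) div n)" "(a-n) mod n = a mod n" using True n0
        by (simp_all add: div_if mod_if)
      have k: "k + int w * int (a div n) = k + int w + int w * int ((a-n) div n)"
        unfolding d by (simp add: algebra_simps)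
      show ?thesis unfolding e2 k using IH[OF lt, of "k + int w"] d(2) by simp
    next
      case F2: False
      have ab: "a < n" "b < n" using False F2 by auto
      show ?thesis unfolding red_valid[OF n0 ab] using ab by (auto simp: hbasis_def)
    qed
  qed
qed

lemma red_nonzero:
  assumes n0: "0<n" and w0: "0<w"
  shows "red n w k a b \<noteq> (hzero :: 'a::ring_1 helt)"
proof
  assume "red n w k a b = (hzero :: 'a helt)"
  then have "(red n w k a b :: 'a helt) (k + int w * int (a div n), a mod n, b mod n) = 0"
    by (simp add: hzero_def)
  then show False using red_lead[OF n0 w0, of k a b, where 'a='a] by simp
qed

lemma xH_red: "0<n \<Longrightarrow> xH = red n w 1 0 0"
  by (simp add: xH_def red_valid)
lemma xinvH_red: "0<n \<Longrightarrow> xinvH = red n w (-1) 0 0"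
  by (simp add: xinvH_def red_valid)
lemma hone_red: "0<n \<Longrightarrow> hone = red n w 0 0 0"
  by (simp add: hone_def red_valid)

lemma hpow_red0:
  assumes n0: "0<n" and g: "(\<gamma>::'k::field)^n = 1"
  shows "hpow n w \<gamma> (red n w k a 0) m = red n w (int m * k) (m * a) 0"
proof (induction m)
  case 0 then show ?case by (simp add: hpow_def hone_red[OF n0])
next
  case (Suc m)
  have "hpow n w \<gamma> (red n w k a 0) (Suc m) = hmul n w \<gamma> (red n w k a 0) (hpow n w \<gamma> (red n w k a 0) m)"
    by (simp add: hpow_def)
  also have "\<dots> = red n w (int (Suc m) * k) (Suc m * a) 0"
    unfolding Suc hmul_red[OF n0 g] by (simp add: algebra_simps)
  finally show ?case .
qed

lemma hzpow_x:
  assumes n0: "0<n" and g: "(\<gamma>::'k::field)^n = 1"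
  shows "hzpow n w \<gamma> xH xinvH r = (red n w r 0 0 :: 'k helt)"
  using hpow_red0[OF n0 g, where k=1 and a=0 and m="nat r" and w=w] hpow_red0[OF n0 g, where k="-1" and a=0 and m="nat (-r)" and w=w]
  by (simp add: hzpow_def xH_red[OF n0, of w] xinvH_red[OF n0, of w])

lemma hzpow_xinv:
  assumes n0: "0<n" and g: "(\<gamma>::'k::field)^n = 1"
  shows "hzpow n w \<gamma> xinvH xH r = (red n w (-r) 0 0 :: 'k helt)"
  using hpow_red0[OF n0 g, where k=1 and a=0 and m="nat (-r)" and w=w] hpow_red0[OF n0 g, where k="-1" and a=0 and m="nat r" and w=w]
  by (simp add: hzpow_def xH_red[OF n0, of w] xinvH_red[OF n0, of w])

definition r0 :: "nat \<Rightarrow> int \<Rightarrow> int \<Rightarrow> int" where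
  "r0 w r i = r + (if 0 \<le> i then 0 else int w * i)"
definition a0 :: "nat \<Rightarrow> int \<Rightarrow> nat" where
  "a0 n i = (if 0 \<le> i then nat i else (n - 1) * nat (- i))"

lemma hzpow_g:
  assumes n0: "0<n" and g: "(\<gamma>::'k::field)^n = 1"
  shows "hzpow n w \<gamma> (gH n w) (ginvH n w) i = (red n w (r0 w 0 i) (a0 n i) 0 :: 'k helt)"
  using hpow_red0[OF n0 g, where k=0 and a=1 and m="nat i" and w=w] hpow_red0[OF n0 g, where k="- int w" and a="n-1" and m="nat (-i)" and w=w]
  by (simp add: hzpow_def gH_def ginvH_def r0_def a0_def algebra_simps)

lemma xgH_red:
  assumes n0: "0<n" and g: "(\<gamma>::'k::field)^n = 1"
  shows "xgH n w \<gamma> r i = (red n w (r0 w r i) (a0 n i) 0 :: 'k helt)"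
  unfolding xgH_def hzpow_x[OF n0 g] hzpow_g[OF n0 g] hmul_red[OF n0 g]
  by (simp add: r0_def)

lemma antipode_expand:
  assumes "finite A" "fsupp f \<subseteq> A"
  shows "antipode n w \<gamma> f d = (\<Sum>p\<in>A. f p * S_basis n w \<gamma> p d)"
  unfolding antipode_def
  by (rule sum.mono_neutral_left) (use assms in \<open>auto simp: fsupp_def\<close>)

lemma antipode_hbasis: "antipode n w \<gamma> (hbasis p) = S_basis n w \<gamma> p"
  by (rule ext) (simp only: antipode_def fsupp_hbasis, simp add: hbasis_def)

lemma hpow0: "hpow n w \<gamma> f 0 = hone" by (simp add: hpow_def)

lemma S_basis_g:
  assumes n0: "0<n" and g: "(\<gamma>::'k::field)^n = 1"
  shows "S_basis n w \<gamma> (0,1,0) = red n w (- int w) (n-1) 0"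
proof -
  have "hpow n w \<gamma> (ginvH n w) 1 = (red n w (- int w) (n-1) 0 :: 'k helt)"
    unfolding ginvH_def hpow_red0[OF n0 g] by simp
  then show ?thesis
    unfolding S_basis_def using hzpow_xinv[OF n0 g, of w 0]
    by (simp add: hpow0 hone_red[OF n0, of w] hmul_red[OF n0 g])
qed

lemma S_basis_x:
  assumes n0: "0<n" and g: "(\<gamma>::'k::field)^n = 1"
  shows "S_basis n w \<gamma> (k,0,0) = red n w (-k) 0 0"
  unfolding S_basis_def using hzpow_xinv[OF n0 g, of w k]
  by (simp add: hpow0 hone_red[OF n0, of w] hmul_red[OF n0 g])

lemma S_basis_y:
  assumes n0: "0<n" and g: "(\<gamma>::'k::field)^n = 1"
  shows "S_basis n w \<gamma> (0,0,1) = (\<lambda>d. (- (\<gamma>^(n-1))) * red n w (- int w) (n-1) 1 d)"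
proof -
  have yg: "hmul n w \<gamma> (yH n w) (ginvH n w) = (\<lambda>d. \<gamma>^(n-1) * red n w (- int w) (n-1) 1 d)"
    unfolding yH_def ginvH_def hmul_red[OF n0 g] by simp
  have neg: "(\<lambda>d. - hmul n w \<gamma> (yH n w) (ginvH n w) d) = (\<lambda>d. (- (\<gamma>^(n-1))) * red n w (- int w) (n-1) 1 d)"
    unfolding yg by simp
  have p1: "hpow n w \<gamma> (\<lambda>d. c * red n w (- int w) (n-1) 1 d) 1 = (\<lambda>d. c * red n w (- int w) (n-1) 1 d)" for c
    unfolding hpow_def hone_red[OF n0, of w]
    by (simp add: hmul_smult_left[OF red_fin[OF n0] red_fin[OF n0]] hmul_red[OF n0 g])
  have u: "hmul n w \<gamma> (\<lambda>d. c * red n w (- int w) (n-1) 1 d) hone = (\<lambda>d. c * red n w (- int w) (n-1) 1 d)" for c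
    unfolding hone_red[OF n0, of w]
    by (simp add: hmul_smult_left[OF red_fin[OF n0] red_fin[OF n0]] hmul_red[OF n0 g])
  have "S_basis n w \<gamma> (0,0,1) = hmul n w \<gamma> (hmul n w \<gamma> (hpow n w \<gamma> (\<lambda>d. - hmul n w \<gamma> (yH n w) (ginvH n w) d) 1) (hpow n w \<gamma> (ginvH n w) 0)) (hzpow n w \<gamma> xinvH xH 0)"
    by (simp only: S_basis_def prod.case)
  also have "\<dots> = hmul n w \<gamma> (hmul n w \<gamma> (\<lambda>d. (- (\<gamma>^(n-1))) * red n w (- int w) (n-1) 1 d) hone) hone"
    unfolding neg p1 hpow0 hzpow_xinv[OF n0 g] hone_red[OF n0, of w] by simp
  also have "\<dots> = (\<lambda>d. (- (\<gamma>^(n-1))) * red n w (- int w) (n-1) 1 d)"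
    unfolding u u ..
  finally show ?thesis .
qed

lemma antipode_gH:
  assumes n0: "0<n" and g: "(\<gamma>::'k::field)^n = 1"
  shows "antipode n w \<gamma> (gH n w) = red n w (- int w) (n-1) 0"
proof (cases "n = 1")
  case True
  have "gH n w = (red n w (int w) 0 0 :: 'k helt)"
    unfolding gH_def using red_age[OF n0, of 0 1 w 0, where 'a='k] True by simp
  also have "\<dots> = hbasis (int w, 0, 0)" using True by (intro red_valid) auto
  moreover have "n - 1 = 0" using True by simp
  ultimately show ?thesis by (simp add: antipode_hbasis S_basis_x[OF n0 g])
next
  case False
  then have "gH n w = (hbasis (0,1,0) :: 'k helt)" unfolding gH_def using n0 by (simp add: red_valid)
  then show ?thesis by (simp only: antipode_hbasis S_basis_g[OF n0 g])
qed

lemma antipode_yH: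
  assumes n0: "0<n" and g: "(\<gamma>::'k::field)^n = 1" and w0: "0 < w"
  shows "antipode n w \<gamma> (yH n w) = (\<lambda>d. (- (\<gamma>^(n-1))) * red n w (- int w) (n-1) 1 d)"
proof (cases "n = 1")
  case True
  have y: "yH n w = (\<lambda>q. (hbasis (0,0,0) :: 'k helt) q - hbasis (int w,0,0) q)"
  proof -
    have "red n w 0 0 0 = (hbasis (0,0,0) :: 'k helt)" "red n w (int w) 0 0 = (hbasis (int w,0,0) :: 'k helt)"
      using True by (intro red_valid; simp)+
    then show ?thesis unfolding yH_def using red_bge[OF n0, of 1 w 0 0, where 'a='k] True by simp
  qed
  have A: "fsupp (yH n w :: 'k helt) \<subseteq> {(0,0,0), (int w,0,0)}"
    unfolding y by (auto simp: fsupp_def hbasis_def)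
  have r: "(red n w (- int w) 0 1 :: 'k helt) = (\<lambda>q. red n w (- int w) 0 0 q - red n w 0 0 0 q)"
    using red_bge[OF n0, of 1 w "- int w" 0, where 'a='k] True by simp
  show ?thesis
  proof
    fix d
    have "antipode n w \<gamma> (yH n w) d = (\<Sum>p\<in>{(0,0,0), (int w,0,0)}. yH n w p * S_basis n w \<gamma> p d)"
      by (rule antipode_expand[OF _ A]) simp
    also have "\<dots> = S_basis n w \<gamma> (0,0,0) d - S_basis n w \<gamma> (int w,0,0) d"
      using w0 by (simp add: y hbasis_def)
    also have "\<dots> = (- (\<gamma>^(n-1))) * red n w (- int w) (n-1) 1 d"
      unfolding S_basis_x[OF n0 g] using True r by simp
    finally show "antipode n w \<gamma> (yH n w) d = (- (\<gamma>^(n-1))) * red n w (- int w) (n-1) 1 d" .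
  qed
next
  case False
  then have "yH n w = (hbasis (0,0,1) :: 'k helt)" unfolding yH_def using n0 by (simp add: red_valid)
  then show ?thesis by (simp only: antipode_hbasis S_basis_y[OF n0 g])
qed


section \<open>Coproduct of y for n >= 2\<close>

lemma tmul_expand:
  assumes "finite A" "fsupp F \<subseteq> A" "finite B" "fsupp G \<subseteq> B"
  shows "tmul n w \<gamma> F G (d1,d2) = (\<Sum>P\<in>A. \<Sum>Q\<in>B. F P * G Q * bmul n w \<gamma> (fst P) (fst Q) d1 * bmul n w \<gamma> (snd P) (snd Q) d2)"
proof -
  have "tmul n w \<gamma> F G (d1,d2) = (\<Sum>P\<in>fsupp F. \<Sum>Q\<in>fsupp G. F P * G Q * bmul n w \<gamma> (fst P) (fst Q) d1 * bmul n w \<gamma> (snd P) (snd Q) d2)"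
    by (simp add: tmul_def)
  also have "\<dots> = (\<Sum>P\<in>A. \<Sum>Q\<in>fsupp G. F P * G Q * bmul n w \<gamma> (fst P) (fst Q) d1 * bmul n w \<gamma> (snd P) (snd Q) d2)"
    by (rule sum.mono_neutral_left) (use assms in \<open>auto simp: fsupp_def\<close>)
  also have "\<dots> = (\<Sum>P\<in>A. \<Sum>Q\<in>B. F P * G Q * bmul n w \<gamma> (fst P) (fst Q) d1 * bmul n w \<gamma> (snd P) (snd Q) d2)"
    by (rule sum.cong[OF refl], rule sum.mono_neutral_left) (use assms in \<open>auto simp: fsupp_def\<close>)
  finally show ?thesis .
qed

lemma tmul_add_left:
  assumes "fin F" "fin F'" "fin G"
  shows "tmul n w \<gamma> (\<lambda>x. F x + F' x) G = (\<lambda>x. tmul n w \<gamma> F G x + tmul n w \<gamma> F' G x)"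
proof
  fix x :: "idx \<times> idx"
  obtain d1 d2 where x: "x = (d1,d2)" by (cases x)
  let ?A = "fsupp F \<union> fsupp F'" and ?B = "fsupp G"
  have fA: "finite ?A" "finite ?B" using assms by (auto simp: fin_def)
  show "tmul n w \<gamma> (\<lambda>x. F x + F' x) G x = tmul n w \<gamma> F G x + tmul n w \<gamma> F' G x"
    unfolding x using fA fsupp_add_sub[of F F']
    by (simp add: tmul_expand[of ?A _ ?B] sum.distrib[symmetric] algebra_simps)
qed

lemma tmul_add_right:
  assumes "fin F" "fin G" "fin G'"
  shows "tmul n w \<gamma> F (\<lambda>x. G x + G' x) = (\<lambda>x. tmul n w \<gamma> F G x + tmul n w \<gamma> F G' x)"
proof
  fix x :: "idx \<times> idx"
  obtain d1 d2 where x: "x = (d1,d2)" by (cases x)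
  let ?A = "fsupp F" and ?B = "fsupp G \<union> fsupp G'"
  have fA: "finite ?A" "finite ?B" using assms by (auto simp: fin_def)
  show "tmul n w \<gamma> F (\<lambda>x. G x + G' x) x = tmul n w \<gamma> F G x + tmul n w \<gamma> F G' x"
    unfolding x using fA fsupp_add_sub[of G G']
    by (simp add: tmul_expand[of ?A _ ?B] sum.distrib[symmetric] algebra_simps)
qed

definition tb :: "idx \<Rightarrow> idx \<Rightarrow> 'k::field telt" where "tb p q = tens (hbasis p) (hbasis q)"

lemma tb_eval: "tb p q (x1,x2) = (if x1 = p \<and> x2 = q then 1 else 0)"
  by (simp add: tb_def tens_def hbasis_def)

lemma fsupp_tb[simp]: "fsupp (tb p q :: 'k::field telt) = {(p,q)}"
  by (auto simp: fsupp_def tb_eval split: if_splits)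

lemma fin_tb[simp]: "fin (tb p q :: 'k::field telt)" by (simp add: fin_def)

lemma tmul_tb: "tmul n w \<gamma> (tb p q) (tb p' q') = tens (bmul n w \<gamma> p p') (bmul n w \<gamma> q q')"
proof
  fix x :: "idx \<times> idx"
  obtain d1 d2 where x: "x = (d1,d2)" by (cases x)
  show "tmul n w \<gamma> (tb p q) (tb p' q') x = tens (bmul n w \<gamma> p p') (bmul n w \<gamma> q q') x"
    unfolding x by (simp only: tmul_def fsupp_tb) (simp add: tb_eval tens_def)
qed

lemma tmul_tens_b: "tmul n w \<gamma> (tens (hbasis p) (hbasis q)) (tens (hbasis p') (hbasis q')) = tens (bmul n w \<gamma> p p') (bmul n w \<gamma> q q')"
  unfolding tb_def[symmetric] by (rule tmul_tb)

context
  fixes n w :: nat and \<gamma> :: "'k::field"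
  assumes n2: "2 \<le> n" and g: "\<gamma>^n = 1"
begin

abbreviation "ey \<equiv> (0::int, 0::nat, 1::nat)"
abbreviation "eg \<equiv> (0::int, 1::nat, 0::nat)"
abbreviation "e1 \<equiv> (0::int, 0::nat, 0::nat)"

lemma n0': "0 < n" using n2 by simp

lemma bmul_e1l: "valid_idx n q \<Longrightarrow> bmul n w \<gamma> e1 q = hbasis q"
  using n0' by (cases q) (simp add: bmul_def red_valid valid_idx_def)
lemma bmul_e1r: "valid_idx n q \<Longrightarrow> bmul n w \<gamma> q e1 = hbasis q"
  using n0' by (cases q) (simp add: bmul_def red_valid valid_idx_def)
lemma valid_ey: "valid_idx n ey" using n2 by (simp add: valid_idx_def)
lemma valid_eg: "valid_idx n eg" using n2 by (simp add: valid_idx_def)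
lemma valid_e1: "valid_idx n e1" using n2 by (simp add: valid_idx_def)

lemma yH_b: "yH n w = (hbasis ey :: 'k helt)" unfolding yH_def using n2 by (simp add: red_valid)
lemma gH_b: "gH n w = (hbasis eg :: 'k helt)" unfolding gH_def using n2 by (simp add: red_valid)
lemma hone_b: "(hone :: 'k helt) = hbasis e1" by (simp add: hone_def)

definition Yt :: "'k telt" where "Yt = (\<lambda>pq. tb ey eg pq + tb e1 ey pq)"

lemma fin_Yt: "fin Yt" unfolding Yt_def by (rule fin_add) simp_all

lemma tmul_11: "tmul n w \<gamma> (tb e1 e1) (tb e1 e1) = tb e1 e1"
  by (simp only: tb_def tmul_tens_b bmul_e1l[OF valid_e1])

lemma tmul_Y1: "tmul n w \<gamma> Yt (tb e1 e1) = Yt"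
  unfolding Yt_def tmul_add_left[OF fin_tb fin_tb fin_tb]
  by (simp only: tb_def tmul_tens_b bmul_e1r[OF valid_e1] bmul_e1r[OF valid_ey] bmul_e1r[OF valid_eg])

lemma tmul_1Y: "tmul n w \<gamma> (tb e1 e1) Yt = Yt"
  unfolding Yt_def tmul_add_right[OF fin_tb fin_tb fin_tb]
  by (simp only: tb_def tmul_tens_b bmul_e1l[OF valid_e1] bmul_e1l[OF valid_ey] bmul_e1l[OF valid_eg])

lemma tmul_G1: "tmul n w \<gamma> (tb eg eg) (tb e1 e1) = tb eg eg"
  by (simp only: tb_def tmul_tens_b bmul_e1r[OF valid_eg])
lemma tmul_1G: "tmul n w \<gamma> (tb e1 e1) (tb eg eg) = tb eg eg"
  by (simp only: tb_def tmul_tens_b bmul_e1l[OF valid_eg])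

lemma Yt_eq: "(\<lambda>pq. tens (yH n w) (gH n w) pq + tens hone (yH n w) pq) = (Yt :: 'k telt)"
  unfolding Yt_def yH_b gH_b hone_b tb_def ..

lemma DB_y: "Delta_basis n w \<gamma> ey = Yt"
proof -
  have "Delta_basis n w \<gamma> ey = tmul n w \<gamma> (tmul n w \<gamma> (tb e1 e1) (tb e1 e1)) (tmul n w \<gamma> Yt (tb e1 e1))"
    unfolding Delta_basis_def Yt_eq by (simp add: tzpow_def tpow_def hone_b tb_def)
  then show ?thesis by (simp add: tmul_11 tmul_Y1 tmul_1Y)
qed

lemma DB_g: "Delta_basis n w \<gamma> eg = tb eg eg"
proof -
  have "Delta_basis n w \<gamma> eg = tmul n w \<gamma> (tmul n w \<gamma> (tb e1 e1) (tmul n w \<gamma> (tb eg eg) (tb e1 e1))) (tb e1 e1)"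
    unfolding Delta_basis_def by (simp add: tzpow_def tpow_def hone_b tb_def gH_b)
  then show ?thesis by (simp only: tmul_G1 tmul_1G)
qed

lemma DB_1: "Delta_basis n w \<gamma> e1 = tb e1 e1"
proof -
  have "Delta_basis n w \<gamma> e1 = tmul n w \<gamma> (tmul n w \<gamma> (tb e1 e1) (tb e1 e1)) (tb e1 e1)"
    unfolding Delta_basis_def by (simp add: tzpow_def tpow_def hone_b tb_def)
  then show ?thesis by (simp add: tmul_11)
qed

lemmas DB_y' = DB_y[unfolded One_nat_def]
lemmas DB_g' = DB_g[unfolded One_nat_def]

lemma Delta_hbasis: "Delta n w \<gamma> (hbasis p) = Delta_basis n w \<gamma> p"
  by (rule ext) (simp only: Delta_def fsupp_hbasis, simp add: hbasis_def)

lemma fsupp_Yt: "fsupp (Yt :: 'k telt) = {(ey,eg), (e1,ey)}"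
  by (auto simp: fsupp_def Yt_def tb_eval split: if_splits)

lemma Delta3_y: "Delta3 n w \<gamma> (yH n w) = (\<lambda>t. if t = (ey,eg,eg) \<or> t = (e1,ey,eg) \<or> t = (e1,e1,ey) then 1 else 0)"
proof
  fix t :: "idx \<times> idx \<times> idx"
  obtain b1 b2 b3 where t: "t = (b1,b2,b3)" by (cases t)
  have "Delta3 n w \<gamma> (yH n w) t = (\<Sum>q\<in>{(ey,eg), (e1,ey)}. if snd q = b3 then Yt q * Delta_basis n w \<gamma> (fst q) (b1, b2) else 0)"
    unfolding t Delta3_def yH_b Delta_hbasis DB_y fsupp_Yt by simp
  also have "\<dots> = (if t = (ey,eg,eg) \<or> t = (e1,ey,eg) \<or> t = (e1,e1,ey) then 1 else 0)"
    unfolding t by (auto simp: DB_y DB_y' DB_1 Yt_def tb_eval)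
  finally show "Delta3 n w \<gamma> (yH n w) t = (if t = (ey,eg,eg) \<or> t = (e1,ey,eg) \<or> t = (e1,e1,ey) then 1 else 0)" .
qed

lemma fsupp_Delta3_y: "fsupp (Delta3 n w \<gamma> (yH n w)) = {(ey,eg,eg), (e1,ey,eg), (e1,e1,ey)}"
  unfolding Delta3_y by (auto simp: fsupp_def)

end


lemma fin_sum: "finite A \<Longrightarrow> (\<And>c. c \<in> A \<Longrightarrow> fin (F c)) \<Longrightarrow> fin (\<lambda>d. \<Sum>c\<in>A. (F c d :: 'a::ab_group_add))"
proof (induction A rule: finite_induct)
  case empty then show ?case by simp
next
  case (insert x A)
  then show ?case using fin_add[of "F x" "\<lambda>d. \<Sum>c\<in>A. F c d"] by simp
qed

lemma hmul_zero_left: "hmul n w \<gamma> (\<lambda>d. 0) g = (\<lambda>d. 0)"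
  by (simp add: hmul_def fsupp_def)

lemma hmul_sum_left:
  assumes "finite A" "\<And>c. c \<in> A \<Longrightarrow> fin (F c)" "fin g"
  shows "hmul n w \<gamma> (\<lambda>d. \<Sum>c\<in>A. F c d) g = (\<lambda>d. \<Sum>c\<in>A. hmul n w \<gamma> (F c) g d)"
  using assms
proof (induction A rule: finite_induct)
  case empty then show ?case by (simp add: hmul_zero_left)
next
  case (insert x A)
  have "hmul n w \<gamma> (\<lambda>d. \<Sum>c\<in>insert x A. F c d) g = hmul n w \<gamma> (\<lambda>d. F x d + (\<Sum>c\<in>A. F c d)) g"
    using insert by simp
  also have "\<dots> = (\<lambda>d. hmul n w \<gamma> (F x) g d + hmul n w \<gamma> (\<lambda>d. \<Sum>c\<in>A. F c d) g d)"
    by (rule hmul_add_left) (use insert fin_sum in auto)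
  also have "\<dots> = (\<lambda>d. \<Sum>c\<in>insert x A. hmul n w \<gamma> (F c) g d)"
    using insert by simp
  finally show ?case .
qed

lemma fin_bmul: "0 < n \<Longrightarrow> fin (bmul n w \<gamma> p q :: 'k::field helt)"
  by (cases p; cases q) (simp add: bmul_def fin_smult red_fin)

lemma hmul_hbasis_left:
  assumes "finite A" "fsupp f \<subseteq> A"
  shows "hmul n w \<gamma> (hbasis b) f = (\<lambda>d. \<Sum>c\<in>A. f c * bmul n w \<gamma> b c d)"
proof
  fix d
  have "hmul n w \<gamma> (hbasis b) f d = (\<Sum>p\<in>{b}. \<Sum>q\<in>A. hbasis b p * f q * bmul n w \<gamma> p q d)"
    by (rule hmul_expand) (simp_all add: assms)
  then show "hmul n w \<gamma> (hbasis b) f d = (\<Sum>c\<in>A. f c * bmul n w \<gamma> b c d)" by (simp add: hbasis_def)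
qed

lemma mid_expand:
  assumes n0: "0 < n" and "finite A" "fsupp f \<subseteq> A" "fin g"
  shows "hmul n w \<gamma> (hmul n w \<gamma> (hbasis b) f) g d = (\<Sum>c\<in>A. f c * hmul n w \<gamma> (hmul n w \<gamma> (hbasis b) (hbasis c)) g d)"
proof -
  have "hmul n w \<gamma> (hmul n w \<gamma> (hbasis b) f) g = hmul n w \<gamma> (\<lambda>d. \<Sum>c\<in>A. f c * bmul n w \<gamma> b c d) g"
    unfolding hmul_hbasis_left[OF assms(2,3)] ..
  also have "\<dots> = (\<lambda>d. \<Sum>c\<in>A. hmul n w \<gamma> (\<lambda>d. f c * bmul n w \<gamma> b c d) g d)"
    by (rule hmul_sum_left) (auto intro!: fin_smult fin_bmul[OF n0] simp: assms)
  also have "\<dots> = (\<lambda>d. \<Sum>c\<in>A. f c * hmul n w \<gamma> (hmul n w \<gamma> (hbasis b) (hbasis c)) g d)"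
    by (simp add: hmul_smult_left[OF fin_bmul[OF n0] assms(4)] hmul_hbasis)
  finally show ?thesis by simp
qed

lemma hmul_one_left:
  assumes n0: "0 < n" and f: "in_H n f"
  shows "hmul n w \<gamma> hone f = f"
proof
  fix d
  have fs: "finite (fsupp f)" using f by (simp add: in_H_def)
  have "hmul n w \<gamma> hone f d = (\<Sum>c\<in>fsupp f. f c * bmul n w \<gamma> (0,0,0) c d)"
    unfolding hone_def hmul_hbasis_left[OF fs subset_refl] ..
  also have "\<dots> = (\<Sum>c\<in>fsupp f. f c * hbasis c d)"
  proof (rule sum.cong[OF refl])
    fix c assume "c \<in> fsupp f"
    then have "valid_idx n c" using f by (simp add: in_H_def)
    then show "f c * bmul n w \<gamma> (0,0,0) c d = f c * hbasis c d"
      using n0 by (cases c) (simp add: bmul_def red_valid valid_idx_def)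
  qed
  also have "\<dots> = f d"
  proof (cases "d \<in> fsupp f")
    case True
    have "\<And>c. f c * hbasis c d = (if c = d then f d else 0)" by (simp add: hbasis_def)
    then show ?thesis using fs True by (simp add: sum.delta)
  next
    case False
    have "\<And>c. f c * hbasis c d = (if c = d then f d else 0)" by (simp add: hbasis_def)
    then show ?thesis using fs False by (simp add: sum.delta fsupp_def)
  qed
  finally show "hmul n w \<gamma> hone f d = f d" .
qed


lemma phi_val:
  assumes n0: "0 < n"
  shows "phi n z = (if z mod int n = 0 then int n else z mod int n)"
  unfolding phi_def
proof (rule the_equality)
  let ?R = "if z mod int n = 0 then int n else z mod int n"
  have "0 \<le> z mod int n" "z mod int n < int n" using n0 by simp_all
  then show "1 \<le> ?R \<and> ?R \<le> int n \<and> z mod int n = ?R mod int n" by auto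
next
  fix m assume m: "1 \<le> m \<and> m \<le> int n \<and> z mod int n = m mod int n"
  show "m = (if z mod int n = 0 then int n else z mod int n)"
  proof (cases "m = int n")
    case True then show ?thesis using m by simp
  next
    case False
    then have "m mod int n = m" using m by (simp add: mod_pos_pos_trivial)
    then show ?thesis using m by auto
  qed
qed

lemma P_eq:
  assumes n0: "0 < n"
  shows "int n - phi n (- i - j) = (i + j) mod int n"
proof -
  have e: "(- i - j) mod int n = (if (i + j) mod int n = 0 then 0 else int n - (i + j) mod int n)"
  proof -
    have "- i - j = - (i + j)" by simp
    then show ?thesis by (simp only: zmod_zminus1_eq_if)
  qed
  have lt: "(i + j) mod int n < int n" using n0 by simp
  show ?thesis
  proof (cases "(i + j) mod int n = 0")
    case True
    then show ?thesis unfolding phi_val[OF n0] e by simp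
  next
    case False
    then show ?thesis unfolding phi_val[OF n0] e using lt by auto
  qed
qed

locale ccs =
  fixes n w :: nat and \<gamma> \<beta> :: "'k::field" and r i :: int
  assumes n0: "0<n" and w0: "0<w" and g: "\<gamma>^n = 1"
begin

abbreviation "Q \<equiv> \<gamma>^(n-1)"
abbreviation "T \<equiv> \<gamma>^(a0 n i)"

lemma gQ: "\<gamma> * Q = 1"
  using g n0 by (metis power_Suc Suc_diff_1)

lemma gQl: "\<gamma>^l * Q^l = 1"
  by (metis gQ power_mult_distrib power_one)

definition Mk :: "nat \<Rightarrow> nat \<Rightarrow> 'k helt" where
  "Mk k b = red n w (r0 w r i - int w * int k) (a0 n i + (n-1)*k) b"

lemma Mk_fin: "fin (Mk k b)" unfolding Mk_def by (rule red_fin[OF n0])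

lemma Mk_nz: "Mk k b \<noteq> hzero" unfolding Mk_def by (rule red_nonzero[OF n0 w0])

lemma Mk_Suc: "red n w (r0 w r i - int w * int k + - int w) (a0 n i + (n - 1) * k + (n - 1)) b = Mk (Suc k) b"
proof -
  have e1: "r0 w r i - int w * int k + - int w = r0 w r i - int w * int (Suc k)" by (simp add: algebra_simps)
  have e2: "a0 n i + (n - 1) * k + (n - 1) = a0 n i + (n-1) * Suc k" by simp
  show ?thesis unfolding Mk_def by (simp only: e1 e2)
qed

lemma pw: "\<gamma>^(b*(n-1)) = Q^b" by (metis mult.commute power_mult)

lemma Sy: "antipode n w \<gamma> (yH n w) = (\<lambda>d. (- Q) * red n w (- int w) (n-1) 1 d)"
  using antipode_yH[OF n0 g w0] by simp

lemma Sg: "antipode n w \<gamma> (gH n w) = red n w (- int w) (n-1) 0"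
  using antipode_gH[OF n0 g] .

lemma m1: "hmul n w \<gamma> (\<lambda>d. c * Mk k b d) (antipode n w \<gamma> (yH n w)) = (\<lambda>d. c * (- Q) * Q^b * Mk (Suc k) (Suc b) d)"
proof -
  have "hmul n w \<gamma> (\<lambda>d. c * Mk k b d) (\<lambda>d. (- Q) * red n w (- int w) (n-1) 1 d)
      = (\<lambda>d. c * ((- Q) * hmul n w \<gamma> (Mk k b) (red n w (- int w) (n-1) 1) d))"
    by (simp only: hmul_smult_left[OF Mk_fin fin_smult[OF red_fin[OF n0]]] hmul_smult_right[OF Mk_fin red_fin[OF n0]])
  also have "\<dots> = (\<lambda>d. c * (- Q) * Q^b * Mk (Suc k) (Suc b) d)"
    unfolding Mk_def hmul_red[OF n0 g] pw
    using Mk_Suc[of k "Suc b"] by (simp add: Mk_def mult_ac)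
  finally show ?thesis unfolding Sy .
qed

lemma m3: "hmul n w \<gamma> (\<lambda>d. c * Mk k b d) (antipode n w \<gamma> (gH n w)) = (\<lambda>d. c * Q^b * Mk (Suc k) b d)"
  unfolding Sg hmul_smult_left[OF Mk_fin red_fin[OF n0]]
  unfolding Mk_def hmul_red[OF n0 g] pw
  using Mk_Suc[of k b] by (simp add: Mk_def mult_ac)

lemma m2: "hmul n w \<gamma> (hmul n w \<gamma> (yH n w) (\<lambda>d. c * Mk k b d)) (antipode n w \<gamma> (gH n w)) = (\<lambda>d. c * T * Q^k * Q^(Suc b) * Mk (Suc k) (Suc b) d)"
proof -
  have e1: "\<gamma>^(1 * (a0 n i + (n - 1) * k)) = T * Q^k" by (simp add: power_add power_mult)
  have A: "hmul n w \<gamma> (yH n w) (\<lambda>d. c * Mk k b d) = (\<lambda>d. (c * T * Q^k) * red n w (r0 w r i - int w * int k) (a0 n i + (n-1)*k) (Suc b) d)"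
    unfolding yH_def hmul_smult_right[OF red_fin[OF n0] Mk_fin]
    unfolding Mk_def hmul_red[OF n0 g] e1 by (simp add: mult_ac)
  have B: "hmul n w \<gamma> (\<lambda>d. C * red n w (r0 w r i - int w * int k) (a0 n i + (n-1)*k) (Suc b) d) (antipode n w \<gamma> (gH n w))
      = (\<lambda>d. C * Q^(Suc b) * Mk (Suc k) (Suc b) d)" for C
    unfolding Sg hmul_smult_left[OF red_fin[OF n0] red_fin[OF n0]]
    unfolding hmul_red[OF n0 g] pw
    using Mk_Suc[of k "Suc b"] by (simp add: mult_ac)
  show ?thesis unfolding A B by (simp add: mult_ac)
qed

lemma invg: "inverse (\<gamma>^l) = Q^l"
  using gQl[of l] by (metis inverse_unique)

lemma cc_formula:
  "cc n w \<gamma> \<beta> r i k l = (if l \<le> k then (\<lambda>d. lam Q (\<beta>*T) k l * Mk k (k-l) d) else hzero)"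
proof (induction k arbitrary: l)
  case 0
  have "xgH n w \<gamma> r i = Mk 0 0" unfolding xgH_red[OF n0 g] Mk_def by simp
  then show ?case by (simp add: lam_diag)
next
  case (Suc k)
  let ?Sy = "antipode n w \<gamma> (yH n w)" and ?Sg = "antipode n w \<gamma> (gH n w)" and ?y = "yH n w"
  have cs: "cc n w \<gamma> \<beta> r i (Suc k) l =
     (if l = 0 then
        hadd (hmul n w \<gamma> (cc n w \<gamma> \<beta> r i k 0) ?Sy)
             (hsmult \<beta> (hmul n w \<gamma> (hmul n w \<gamma> ?y (cc n w \<gamma> \<beta> r i k 0)) ?Sg))
      else if l < Suc k then
        hadd (hadd (hmul n w \<gamma> (cc n w \<gamma> \<beta> r i k l) ?Sy)
                   (hsmult (\<beta> * inverse (\<gamma> ^ l)) (hmul n w \<gamma> (hmul n w \<gamma> ?y (cc n w \<gamma> \<beta> r i k l)) ?Sg)))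
             (hmul n w \<gamma> (cc n w \<gamma> \<beta> r i k (l - 1)) ?Sg)
      else if l = Suc k then hmul n w \<gamma> (cc n w \<gamma> \<beta> r i k k) ?Sg
      else hzero)"
    by (simp only: cc.simps Let_def)
  show ?case
  proof (cases "l = 0")
    case True
    have "cc n w \<gamma> \<beta> r i (Suc k) l = (\<lambda>d. lam Q (\<beta>*T) k 0 * (- Q) * Q^k * Mk (Suc k) (Suc k) d
              + \<beta> * (lam Q (\<beta>*T) k 0 * T * Q^k * Q^(Suc k) * Mk (Suc k) (Suc k) d))"
      unfolding cs Suc.IH using True by (simp add: m1 m2 hadd_def hsmult_def)
    also have "\<dots> = (\<lambda>d. lam Q (\<beta>*T) (Suc k) l * Mk (Suc k) (Suc k - l) d)"
      using True by (simp add: lam_rec0 algebra_simps)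
    finally show ?thesis using True by simp
  next
    case False
    show ?thesis
    proof (cases "l < Suc k")
      case True
      have kl: "k - (l - 1) = Suc (k - l)" "Suc k - l = Suc (k - l)" using True False by auto
      have lk: "l \<le> k" "l - 1 \<le> k" "\<not> Suc k \<le> l" using True by auto
      have "cc n w \<gamma> \<beta> r i (Suc k) l = (\<lambda>d. lam Q (\<beta>*T) k l * (- Q) * Q^(k-l) * Mk (Suc k) (Suc (k-l)) d
              + \<beta> * Q^l * (lam Q (\<beta>*T) k l * T * Q^k * Q^(Suc (k-l)) * Mk (Suc k) (Suc (k-l)) d)
              + lam Q (\<beta>*T) k (l-1) * Q^(Suc (k-l)) * Mk (Suc k) (Suc (k-l)) d)"
        unfolding cs Suc.IH if_P[OF lk(1)] if_P[OF lk(2)] using True False kl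
        by (simp add: m1 m2 m3 hadd_def hsmult_def invg)
      also have "\<dots> = (\<lambda>d. lam Q (\<beta>*T) (Suc k) l * Mk (Suc k) (Suc k - l) d)"
        unfolding kl(2) lam_rec[of l k, OF _ _] using True False
        by (simp add: lam_rec[of l k] kl power_add algebra_simps)
      finally show ?thesis using True by simp
    next
      case F2: False
      show ?thesis
      proof (cases "l = Suc k")
        case True
        have "cc n w \<gamma> \<beta> r i (Suc k) l = (\<lambda>d. lam Q (\<beta>*T) k k * Q^0 * Mk (Suc k) 0 d)"
          unfolding cs Suc.IH using True by (simp add: m3)
        then show ?thesis using True by (simp add: lam_diag)
      next
        case F3: False
        then show ?thesis unfolding cs using False F2 by simp
      qed
    qed
  qed
qed

lemma in_H_cc: "in_H n (cc n w \<gamma> \<beta> r i k l)"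
proof (cases "l \<le> k")
  case True
  have f: "fin (\<lambda>d. lam Q (\<beta>*T) k l * Mk k (k-l) d)" by (rule fin_smult[OF Mk_fin])
  have v: "\<forall>d. lam Q (\<beta>*T) k l * Mk k (k-l) d \<noteq> 0 \<longrightarrow> valid_idx n d"
    unfolding Mk_def using red_supp_valid[OF n0, where 'a='k] by auto
  show ?thesis unfolding cc_formula using True f v by (simp add: in_H_def fin_def fsupp_def)
next
  case False
  then show ?thesis unfolding cc_formula by (simp add: in_H_def hzero_def fsupp_def)
qed

end

lemma in_H_red: "0 < n \<Longrightarrow> in_H n (red n w k a b :: 'a::ring_1 helt)"
  using red_fin_valid[of n w k a b, where 'a='a] by (auto simp: in_H_def fin_def fsupp_def)

locale yd = ccs n w \<gamma> \<beta> r i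
  for n w :: nat and \<gamma> \<beta> :: "'k::field" and r i :: int +
  fixes sc :: "'k \<Rightarrow> 'v::ab_group_add \<Rightarrow> 'v" and \<rho> \<delta> :: "idx \<Rightarrow> 'v \<Rightarrow> 'v" and v :: 'v and \<alpha> :: 'k
  assumes YD: "YD_module n w \<gamma> sc \<rho> \<delta>"
    and std: "standard_elem n w \<gamma> sc \<rho> \<delta> v \<alpha> \<beta> (xgH n w \<gamma> r i)"
    and prim: "\<And>l. 0 < l \<Longrightarrow> l < n \<Longrightarrow> \<gamma>^l \<noteq> 1"
begin

lemma vs: "vector_space sc" using YD by (simp add: YD_module_def)

sublocale vs: vector_space sc by (rule vs)

lemma rho_hom: "module_hom sc sc (\<rho> p)"
  using YD unfolding YD_module_def module_hom_iff_linear by blast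
lemma delta_hom: "module_hom sc sc (\<delta> p)"
  using YD unfolding YD_module_def module_hom_iff_linear by blast

lemma H_one: "Hact sc \<rho> hone x = x" using YD by (simp add: YD_module_def)
lemma H_mul: "in_H n f \<Longrightarrow> in_H n g \<Longrightarrow> Hact sc \<rho> (hmul n w \<gamma> f g) x = Hact sc \<rho> f (Hact sc \<rho> g x)"
  using YD by (simp add: YD_module_def)
lemma delta_fin: "finite {p. \<delta> p x \<noteq> 0}" using YD by (simp add: YD_module_def)
lemma YDc: "in_H n f \<Longrightarrow> \<delta> d (Hact sc \<rho> f x) =
          (\<Sum>t\<in>fsupp (Delta3 n w \<gamma> f). \<Sum>c\<in>{c. \<delta> c x \<noteq> 0}.
             (case t of (b1, b2, b3) \<Rightarrow>
               sc (Delta3 n w \<gamma> f t *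
                   hmul n w \<gamma> (hmul n w \<gamma> (hbasis b1) (hbasis c)) (antipode n w \<gamma> (hbasis b3)) d)
                  (\<rho> b2 (\<delta> c x))))"
  using YD unfolding YD_module_def by blast

lemma v_nz: "v \<noteq> 0" and \<alpha>_nz: "\<alpha> \<noteq> 0" and \<beta>_nz: "\<beta> \<noteq> 0"
  and x_v: "Hact sc \<rho> xH v = sc \<alpha> v" and g_v: "Hact sc \<rho> (gH n w) v = sc \<beta> v"
  and delta_v: "\<delta> p v = sc (xgH n w \<gamma> r i p) v"
  using std unfolding standard_elem_def by blast+

lemma H_expand:
  assumes "finite A" "fsupp f \<subseteq> A"
  shows "Hact sc \<rho> f x = (\<Sum>p\<in>A. sc (f p) (\<rho> p x))"
  unfolding Hact_def
  by (rule sum.mono_neutral_left) (use assms in \<open>auto simp: fsupp_def\<close>)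

lemma H_hbasis: "Hact sc \<rho> (hbasis p :: 'k helt) x = \<rho> p x"
  by (simp only: Hact_def fsupp_hbasis) (simp add: hbasis_def)

lemma H_hom: "module_hom sc sc (Hact sc \<rho> f)"
proof -
  have a: "Hact sc \<rho> f (x + y) = Hact sc \<rho> f x + Hact sc \<rho> f y" for x y
    unfolding Hact_def by (simp add: module_hom.add[OF rho_hom] vs.scale_right_distrib sum.distrib)
  have s: "Hact sc \<rho> f (sc c x) = sc c (Hact sc \<rho> f x)" for c x
    unfolding Hact_def by (simp add: module_hom.scale[OF rho_hom] vs.scale_sum_right mult.commute)
  show ?thesis by unfold_locales (auto simp: a s)
qed

lemma H_zero: "Hact sc \<rho> f 0 = 0" by (rule module_hom.zero[OF H_hom])
lemma H_add: "Hact sc \<rho> f (x + y) = Hact sc \<rho> f x + Hact sc \<rho> f y" by (rule module_hom.add[OF H_hom])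
lemma H_scale: "Hact sc \<rho> f (sc c x) = sc c (Hact sc \<rho> f x)" by (rule module_hom.scale[OF H_hom])

lemma H_diff_f:
  assumes "fin f" "fin g"
  shows "Hact sc \<rho> (\<lambda>d. f d - g d) x = Hact sc \<rho> f x - Hact sc \<rho> g x"
proof -
  let ?A = "fsupp f \<union> fsupp g"
  have fA: "finite ?A" using assms by (auto simp: fin_def)
  show ?thesis using fA fsupp_diff_sub[of f g]
    by (simp add: H_expand[of ?A] vs.scale_left_diff_distrib sum_subtractf)
qed

lemma H_smult_f:
  assumes "fin f"
  shows "Hact sc \<rho> (\<lambda>d. c * f d) x = sc c (Hact sc \<rho> f x)"
proof -
  have fA: "finite (fsupp f)" using assms by (auto simp: fin_def)
  show ?thesis using fA fsupp_smult_sub[of c f]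
    by (simp add: H_expand[of "fsupp f"] vs.scale_sum_right)
qed

abbreviation R :: "int \<Rightarrow> nat \<Rightarrow> nat \<Rightarrow> 'k helt" where "R k a b \<equiv> red n w k a b"

lemma inR: "in_H n (R k a b)" by (rule in_H_red[OF n0])

lemma HRmul: "Hact sc \<rho> (R k a b) (Hact sc \<rho> (R k' a' b') x) = sc (\<gamma>^(b*a')) (Hact sc \<rho> (R (k+k') (a+a') (b+b')) x)"
  using H_mul[OF inR inR, of k a b k' a' b' x] unfolding hmul_red[OF n0 g]
  by (simp add: H_smult_f[OF red_fin[OF n0]])

lemma H_R0: "Hact sc \<rho> (R 0 0 0) x = x"
  using H_one[of x] hone_red[OF n0, of w, where 'a='k] by simp

lemma H_xpos: "\<exists>c. Hact sc \<rho> (R (int m) 0 0) v = sc c v"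
proof (induction m)
  case 0 then show ?case using H_R0 by (intro exI[of _ 1]) simp
next
  case (Suc m)
  then obtain c where c: "Hact sc \<rho> (R (int m) 0 0) v = sc c v" by blast
  have "Hact sc \<rho> (R 1 0 0) (Hact sc \<rho> (R (int m) 0 0) v) = Hact sc \<rho> (R (1 + int m) 0 0) v"
    using HRmul[of 1 0 0 "int m" 0 0 v] by simp
  then have "Hact sc \<rho> (R (int (Suc m)) 0 0) v = sc (c * \<alpha>) v"
    using c x_v xH_red[OF n0, of w, where 'a='k] by (simp add: H_scale mult.commute)
  then show ?case by blast
qed

lemma H_x: "\<exists>c. Hact sc \<rho> (R K 0 0) v = sc c v"
proof (cases "0 \<le> K")
  case True
  then show ?thesis using H_xpos[of "nat K"] by simp
next
  case False
  define m where "m = nat (- K)"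
  have K: "K = - int m" using False by (simp add: m_def)
  obtain c where c: "Hact sc \<rho> (R (int m) 0 0) v = sc c v" using H_xpos by blast
  have "Hact sc \<rho> (R (- int m) 0 0) (Hact sc \<rho> (R (int m) 0 0) v) = Hact sc \<rho> (R 0 0 0) v"
    using HRmul[of "- int m" 0 0 "int m" 0 0 v] by simp
  then have "sc c (Hact sc \<rho> (R (- int m) 0 0) v) = v" using c H_R0 by (simp add: H_scale)
  moreover have "c \<noteq> 0" using calculation v_nz by auto
  ultimately have "Hact sc \<rho> (R (- int m) 0 0) v = sc (inverse c) v"
    by (metis vs.scale_scale left_inverse vs.scale_one)
  then show ?thesis unfolding K by blast
qed

lemma H_g: "Hact sc \<rho> (R 0 a 0) v = sc (\<beta>^a) v"
proof (induction a)
  case 0 then show ?case using H_R0 by simp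
next
  case (Suc a)
  have "Hact sc \<rho> (R 0 1 0) (Hact sc \<rho> (R 0 a 0) v) = Hact sc \<rho> (R 0 (Suc a) 0) v"
    using HRmul[of 0 1 0 0 a 0 v] by simp
  then show ?case using Suc g_v by (simp add: H_scale gH_def algebra_simps)
qed

definition U :: "nat \<Rightarrow> 'v" where "U b = Hact sc \<rho> (R 0 0 b) v"

lemma QgB: "sc (Q^m) (sc (\<gamma>^m) x) = x"
  using gQl[of m] by (simp add: mult.commute)

lemma HU: "\<exists>c. Hact sc \<rho> (R K a B) v = sc c (U B)"
proof -
  obtain c where c: "Hact sc \<rho> (R K 0 0) v = sc c v" using H_x by blast
  have "Hact sc \<rho> (R K 0 0) (Hact sc \<rho> (R 0 a 0) v) = Hact sc \<rho> (R K a 0) v"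
    using HRmul[of K 0 0 0 a 0 v] by simp
  then have xa: "Hact sc \<rho> (R K a 0) v = sc (\<beta>^a * c) v" using c H_g by (simp add: H_scale)
  have "Hact sc \<rho> (R 0 0 B) (Hact sc \<rho> (R K a 0) v) = sc (\<gamma>^(B*a)) (Hact sc \<rho> (R K a B) v)"
    using HRmul[of 0 0 B K a 0 v] by simp
  then have "sc (\<gamma>^(B*a)) (Hact sc \<rho> (R K a B) v) = sc (\<beta>^a * c) (U B)"
    using xa by (simp add: H_scale U_def)
  then have "Hact sc \<rho> (R K a B) v = sc (Q^(B*a) * (\<beta>^a * c)) (U B)"
    by (metis QgB vs.scale_scale)
  then show ?thesis by blast
qed

lemma HU0: "Hact sc \<rho> (R 0 a B) v = sc (Q^(B*a) * \<beta>^a) (U B)"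
proof -
  have "Hact sc \<rho> (R 0 0 B) (Hact sc \<rho> (R 0 a 0) v) = sc (\<gamma>^(B*a)) (Hact sc \<rho> (R 0 a B) v)"
    using HRmul[of 0 0 B 0 a 0 v] by simp
  then have "sc (\<gamma>^(B*a)) (Hact sc \<rho> (R 0 a B) v) = sc (\<beta>^a) (U B)"
    using H_g by (simp add: H_scale U_def)
  then show ?thesis by (metis QgB vs.scale_scale)
qed

lemma HRU: "Hact sc \<rho> (R K a B) (U b) = Hact sc \<rho> (R K a (B+b)) v"
  using HRmul[of K a B 0 0 b v] by (simp add: U_def)

lemma U_Suc: "Hact sc \<rho> (yH n w) (U b) = U (Suc b)"
  using HRU[of 0 0 1 b] by (simp add: yH_def U_def)

lemma U_g: "Hact sc \<rho> (gH n w) (U b) = sc (\<beta> * Q^b) (U b)"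
  using HRU[of 0 1 0 b] HU0[of 1 b] by (simp add: gH_def mult.commute)

lemma U0: "U 0 = v" by (simp add: U_def H_R0)

lemma U_n: "U n = sc (1 - \<beta>^n) v"
proof -
  have "R 0 0 n = (\<lambda>q. R 0 0 0 q - R (int w) 0 0 q)" using red_bge[OF n0, of n w 0 0] by simp
  then have "U n = v - Hact sc \<rho> (R (int w) 0 0) v"
    unfolding U_def using H_diff_f[OF red_fin[OF n0] red_fin[OF n0]] H_R0 by simp
  also have "R (int w) 0 0 = R 0 n 0" using red_age_gen[OF n0, of n w 0 0, where 'a='k] by simp
  finally show ?thesis using H_g[of n] by (simp add: vs.scale_left_diff_distrib)
qed

lemma U_zero: "U b = 0 \<Longrightarrow> U (t + b) = 0"
  using HRU[of 0 0 t b] H_zero by (simp add: U_def)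

lemma rho_U: "valid_idx n p \<Longrightarrow> \<exists>c. \<rho> p (U b) = sc c (U (snd (snd p) + b))"
proof -
  assume vp: "valid_idx n p"
  obtain K a B where p: "p = (K,a,B)" by (cases p)
  have "\<rho> p (U b) = Hact sc \<rho> (R K a B) (U b)"
    using vp p n0 by (simp add: H_hbasis[symmetric] red_valid valid_idx_def)
  also have "\<dots> = Hact sc \<rho> (R K a (B+b)) v" by (rule HRU)
  finally show ?thesis using HU[of K a "B+b"] p by auto
qed

lemma Q_prim: "0 < l \<Longrightarrow> l < n \<Longrightarrow> Q^l \<noteq> 1"
  using gQl[of l] prim[of l] by auto

lemma Q_nz: "Q \<noteq> 0" using gQ by auto
lemma g_nz: "\<gamma> \<noteq> 0" using gQ by auto

lemma Q_inj: "b < n \<Longrightarrow> b' < n \<Longrightarrow> Q^b = Q^b' \<Longrightarrow> b = b'"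
proof (rule ccontr)
  assume a: "b < n" "b' < n" "Q^b = Q^b'" "b \<noteq> b'"
  show False
  proof (cases "b < b'")
    case True
    then have "Q^b' = Q^b * Q^(b'-b)" by (simp flip: power_add)
    then have "Q^(b'-b) = 1" using a(3) Q_nz g_nz by simp
    moreover have "0 < b'-b" "b'-b < n" using True a by auto
    ultimately show False using Q_prim by blast
  next
    case False
    then have "Q^b = Q^b' * Q^(b-b')" using a by (simp flip: power_add)
    then have "Q^(b-b') = 1" using a(3) Q_nz g_nz by simp
    moreover have "0 < b-b'" "b-b' < n" using False a by auto
    ultimately show False using Q_prim by blast
  qed
qed

lemma H_sum: "Hact sc \<rho> f (\<Sum>b\<in>A. h b) = (\<Sum>b\<in>A. Hact sc \<rho> f (h b))"
  by (rule module_hom.sum[OF H_hom])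

lemma eig_indep:
  "m \<le> n \<Longrightarrow> (\<forall>b<m. U b \<noteq> 0) \<Longrightarrow> (\<Sum>b<m. sc (c b) (U b)) = 0 \<Longrightarrow> \<forall>b<m. c b = 0"
proof (induction m arbitrary: c)
  case 0 then show ?case by simp
next
  case (Suc m)
  let ?L = "Hact sc \<rho> (gH n w)"
  have "?L (\<Sum>b<Suc m. sc (c b) (U b)) = (\<Sum>b<Suc m. sc (c b * (\<beta> * Q^b)) (U b))"
    by (simp only: H_sum H_scale U_g vs.scale_scale)
  then have e1: "(\<Sum>b<Suc m. sc (c b * (\<beta> * Q^b)) (U b)) = 0" using Suc.prems H_zero by simp
  have "(\<Sum>b<Suc m. sc (c b * (\<beta> * Q^m)) (U b)) = sc (\<beta> * Q^m) (\<Sum>b<Suc m. sc (c b) (U b))"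
    by (simp only: vs.scale_sum_right vs.scale_scale mult.commute)
  then have e2: "(\<Sum>b<Suc m. sc (c b * (\<beta> * Q^m)) (U b)) = 0"
    using Suc.prems(3) by simp
  have "(\<Sum>b<Suc m. sc (c b * (\<beta> * Q^b) - c b * (\<beta> * Q^m)) (U b)) = 0"
    using e1 e2 by (simp add: vs.scale_left_diff_distrib sum_subtractf)
  then have "(\<Sum>b<m. sc (c b * (\<beta> * Q^b) - c b * (\<beta> * Q^m)) (U b)) = 0" by simp
  then have z: "\<forall>b<m. c b * (\<beta> * Q^b) - c b * (\<beta> * Q^m) = 0"
    using Suc.IH[of "\<lambda>b. c b * (\<beta> * Q^b) - c b * (\<beta> * Q^m)"] Suc.prems by simp
  have cb: "\<forall>b<m. c b = 0"
  proof (intro allI impI)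
    fix b assume b: "b < m"
    have "c b * \<beta> * (Q^b - Q^m) = 0" using z b by (simp add: algebra_simps)
    moreover have "Q^b \<noteq> Q^m" using Q_inj[of b m] b Suc.prems(1) by auto
    ultimately show "c b = 0" using \<beta>_nz by simp
  qed
  then have "sc (c m) (U m) = 0" using Suc.prems(3) by simp
  then have "c m = 0" using Suc.prems(2) by simp
  with cb show ?case by (simp add: less_Suc_eq)
qed

lemma U_inj: "m \<le> n \<Longrightarrow> (\<forall>b<m. U b \<noteq> 0) \<Longrightarrow> inj_on U {..<m}"
proof (rule inj_onI)
  fix b b' assume m: "m \<le> n" "\<forall>b<m. U b \<noteq> 0" and bb: "b \<in> {..<m}" "b' \<in> {..<m}" "U b = U b'"
  have "sc (\<beta> * Q^b) (U b) = Hact sc \<rho> (gH n w) (U b)" by (simp only: U_g)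
  also have "\<dots> = Hact sc \<rho> (gH n w) (U b')" using bb by simp
  also have "\<dots> = sc (\<beta> * Q^b') (U b')" by (simp only: U_g)
  also have "\<dots> = sc (\<beta> * Q^b') (U b)" using bb by simp
  finally have "sc (\<beta> * Q^b) (U b) = sc (\<beta> * Q^b') (U b)" .
  moreover have "U b \<noteq> 0" using m bb by auto
  ultimately have "\<beta> * Q^b = \<beta> * Q^b'" by (metis vs.scale_cancel_right)
  then show "b = b'" using Q_inj[of b b'] \<beta>_nz m bb by auto
qed

lemma U_indep: "m \<le> n \<Longrightarrow> (\<forall>b<m. U b \<noteq> 0) \<Longrightarrow> vs.independent (U ` {..<m})"
proof -
  assume m: "m \<le> n" "\<forall>b<m. U b \<noteq> 0"
  have inj: "inj_on U {..<m}" by (rule U_inj[OF m])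
  show ?thesis unfolding vs.dependent_finite[OF finite_imageI[OF finite_lessThan]]
  proof (intro notI, elim exE conjE)
    fix c assume nz: "\<exists>x\<in>U ` {..<m}. c x \<noteq> 0" and s: "(\<Sum>x\<in>U ` {..<m}. sc (c x) x) = 0"
    from s have "(\<Sum>b<m. sc (c (U b)) (U b)) = 0" by (simp add: sum.reindex[OF inj])
    then have "\<forall>b<m. c (U b) = 0" by (rule eig_indep[OF m])
    then show False using nz by auto
  qed
qed

lemma lin_span:
  assumes "x \<in> vs.span S" "module_hom sc sc L" "\<And>s. s \<in> S \<Longrightarrow> L s \<in> vs.span S'"
  shows "L x \<in> vs.span S'"
  using assms(1)
proof (induction rule: vs.span_induct_alt)
  case base then show ?case using module_hom.zero[OF assms(2)] vs.span_zero by simp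
next
  case (step c x y)
  then show ?case using module_hom.add[OF assms(2)] module_hom.scale[OF assms(2)] assms(3)
    by (simp add: vs.span_add vs.span_scale)
qed

lemma U_in_span: "U B \<in> vs.span (U ` {..<n})"
proof (induction B rule: less_induct)
  case (less B)
  show ?case
  proof (cases "B < n")
    case True then show ?thesis by (simp add: vs.span_base)
  next
    case False
    have e: "R 0 0 B = (\<lambda>q. R 0 0 (B-n) q - R (int w) 0 (B-n) q)"
      using red_bge[OF n0, of B w 0 0, where 'a='k] False by simp
    obtain c where c: "Hact sc \<rho> (R (int w) 0 (B-n)) v = sc c (U (B-n))" using HU by blast
    have "U B = U (B-n) - sc c (U (B-n))"
      unfolding U_def e H_diff_f[OF red_fin[OF n0] red_fin[OF n0]] using c by (simp add: U_def)
    moreover have "U (B-n) \<in> vs.span (U ` {..<n})" using less n0 False by simp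
    ultimately show ?thesis by (simp add: vs.span_diff vs.span_scale)
  qed
qed

lemma fin_Sg: "fin (antipode n w \<gamma> (gH n w))" unfolding Sg by (rule red_fin[OF n0])
lemma fin_Sy: "fin (antipode n w \<gamma> (yH n w))" unfolding Sy by (rule fin_smult[OF red_fin[OF n0]])

lemma delta_U:
  assumes n2: "2 \<le> n"
  shows "\<delta> d (U k) = (\<Sum>l\<le>k. sc (cc n w \<gamma> \<beta> r i k l d) (U l))"
proof (induction k arbitrary: d)
  case 0
  show ?case by (simp add: U0 delta_v)
next
  case (Suc k)
  let ?C = "{c. \<delta> c (U k) \<noteq> 0}"
  let ?C' = "?C \<union> (\<Union>l\<le>k. fsupp (cc n w \<gamma> \<beta> r i k l))"
  have finC': "finite ?C'" using delta_fin in_H_cc by (auto simp: in_H_def)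
  have yb: "yH n w = (hbasis (0,0,1) :: 'k helt)" by (rule yH_b[OF n2 g])
  have gb: "gH n w = (hbasis (0,1,0) :: 'k helt)" by (rule gH_b[OF n2 g])
  have inH_y: "in_H n (yH n w :: 'k helt)" unfolding yH_def by (rule inR)
  have key: "(\<Sum>c\<in>?C. sc (hmul n w \<gamma> (hmul n w \<gamma> (hbasis b1) (hbasis c)) (antipode n w \<gamma> (hbasis b3)) d) (\<rho> b2 (\<delta> c (U k))))
     = (\<Sum>l\<le>k. sc (hmul n w \<gamma> (hmul n w \<gamma> (hbasis b1) (cc n w \<gamma> \<beta> r i k l)) (antipode n w \<gamma> (hbasis b3)) d) (\<rho> b2 (U l)))"
    if fS: "fin (antipode n w \<gamma> (hbasis b3) :: 'k helt)" for b1 b2 b3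
  proof -
    let ?X = "\<lambda>c. hmul n w \<gamma> (hmul n w \<gamma> (hbasis b1) (hbasis c)) (antipode n w \<gamma> (hbasis b3)) d"
    have "(\<Sum>c\<in>?C. sc (?X c) (\<rho> b2 (\<delta> c (U k)))) = (\<Sum>c\<in>?C'. sc (?X c) (\<rho> b2 (\<delta> c (U k))))"
      by (rule sum.mono_neutral_left) (use finC' module_hom.zero[OF rho_hom] in auto)
    also have "\<dots> = (\<Sum>c\<in>?C'. \<Sum>l\<le>k. sc (?X c * cc n w \<gamma> \<beta> r i k l c) (\<rho> b2 (U l)))"
      unfolding Suc.IH by (simp add: module_hom.sum[OF rho_hom] module_hom.scale[OF rho_hom] vs.scale_sum_right)
    also have "\<dots> = (\<Sum>l\<le>k. \<Sum>c\<in>?C'. sc (?X c * cc n w \<gamma> \<beta> r i k l c) (\<rho> b2 (U l)))"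
      by (rule sum.swap)
    also have "\<dots> = (\<Sum>l\<le>k. sc (\<Sum>c\<in>?C'. cc n w \<gamma> \<beta> r i k l c * ?X c) (\<rho> b2 (U l)))"
      by (simp add: vs.scale_sum_left mult.commute)
    also have "\<dots> = (\<Sum>l\<le>k. sc (hmul n w \<gamma> (hmul n w \<gamma> (hbasis b1) (cc n w \<gamma> \<beta> r i k l)) (antipode n w \<gamma> (hbasis b3)) d) (\<rho> b2 (U l)))"
    proof (rule sum.cong[OF refl])
      fix l assume l: "l \<in> {..k}"
      have "fsupp (cc n w \<gamma> \<beta> r i k l) \<subseteq> ?C'" using l by blast
      then show "sc (\<Sum>c\<in>?C'. cc n w \<gamma> \<beta> r i k l c * ?X c) (\<rho> b2 (U l)) = sc (hmul n w \<gamma> (hmul n w \<gamma> (hbasis b1) (cc n w \<gamma> \<beta> r i k l)) (antipode n w \<gamma> (hbasis b3)) d) (\<rho> b2 (U l))"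
        using mid_expand[OF n0 finC' _ fS, where f="cc n w \<gamma> \<beta> r i k l" and b=b1 and d=d] by simp
    qed
    finally show ?thesis .
  qed
  let ?Sy = "antipode n w \<gamma> (yH n w)" and ?Sg = "antipode n w \<gamma> (gH n w)"
  define A1 where "A1 l = hmul n w \<gamma> (hmul n w \<gamma> (yH n w) (cc n w \<gamma> \<beta> r i k l)) ?Sg d" for l
  define A2 where "A2 l = hmul n w \<gamma> (cc n w \<gamma> \<beta> r i k l) ?Sg d" for l
  define A3 where "A3 l = hmul n w \<gamma> (cc n w \<gamma> \<beta> r i k l) ?Sy d" for l
  have one: "hmul n w \<gamma> (hbasis (0,0,0)) (cc n w \<gamma> \<beta> r i k l) = cc n w \<gamma> \<beta> r i k l" for l
    using hmul_one_left[OF n0 in_H_cc] by (simp add: hone_def)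
  have r1: "\<rho> (0,1,0) x = Hact sc \<rho> (gH n w) x" for x unfolding gb H_hbasis ..
  have r2: "\<rho> (0,0,1) x = Hact sc \<rho> (yH n w) x" for x unfolding yb H_hbasis ..
  have r3: "\<rho> (0,0,0) x = x" for x using H_hbasis[of "(0,0,0)" x] H_one by (simp add: hone_def)
  have T1: "(\<Sum>c\<in>?C. sc (hmul n w \<gamma> (hmul n w \<gamma> (hbasis (0,0,1)) (hbasis c)) (antipode n w \<gamma> (hbasis (0,1,0))) d) (\<rho> (0,1,0) (\<delta> c (U k))))
      = (\<Sum>l\<le>k. sc (A1 l * (\<beta> * Q^l)) (U l))"
    using key[of "(0,1,0)" "(0,0,1)" "(0,1,0)"] fin_Sg unfolding yb[symmetric] gb[symmetric]
    by (simp add: A1_def r1 r1[unfolded One_nat_def] U_g)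
  have T2: "(\<Sum>c\<in>?C. sc (hmul n w \<gamma> (hmul n w \<gamma> (hbasis (0,0,0)) (hbasis c)) (antipode n w \<gamma> (hbasis (0,1,0))) d) (\<rho> (0,0,1) (\<delta> c (U k))))
      = (\<Sum>l\<le>k. sc (A2 l) (U (Suc l)))"
    using key[of "(0,1,0)" "(0,0,0)" "(0,0,1)"] fin_Sg unfolding gb[symmetric]
    by (simp add: A2_def r2 r2[unfolded One_nat_def] U_Suc one)
  have T3: "(\<Sum>c\<in>?C. sc (hmul n w \<gamma> (hmul n w \<gamma> (hbasis (0,0,0)) (hbasis c)) (antipode n w \<gamma> (hbasis (0,0,1))) d) (\<rho> (0,0,0) (\<delta> c (U k))))
      = (\<Sum>l\<le>k. sc (A3 l) (U l))"
    using key[of "(0,0,1)" "(0,0,0)" "(0,0,0)"] fin_Sy unfolding yb[symmetric]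
    by (simp add: A3_def r3 one)
  have "\<delta> d (U (Suc k)) = \<delta> d (Hact sc \<rho> (yH n w) (U k))" by (simp add: U_Suc)
  also have "\<dots> = (\<Sum>t\<in>fsupp (Delta3 n w \<gamma> (yH n w)). \<Sum>c\<in>?C.
             (case t of (b1, b2, b3) \<Rightarrow>
               sc (Delta3 n w \<gamma> (yH n w) t *
                   hmul n w \<gamma> (hmul n w \<gamma> (hbasis b1) (hbasis c)) (antipode n w \<gamma> (hbasis b3)) d)
                  (\<rho> b2 (\<delta> c (U k)))))"
    by (rule YDc[OF inH_y])
  also have "\<dots> = (\<Sum>l\<le>k. sc (A1 l * (\<beta> * Q^l)) (U l)) + (\<Sum>l\<le>k. sc (A2 l) (U (Suc l))) + (\<Sum>l\<le>k. sc (A3 l) (U l))"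
    unfolding fsupp_Delta3_y[OF n2 g] using T1 T2 T3 by (simp add: Delta3_y[OF n2 g])
  also have "\<dots> = (\<Sum>l\<le>Suc k. sc (cc n w \<gamma> \<beta> r i (Suc k) l d) (U l))"
  proof -
    define Y1 where "Y1 l = (if l \<le> k then A3 l + \<beta> * Q^l * A1 l else 0)" for l
    define Y2 where "Y2 l = (if l = 0 then 0 else A2 (l-1))" for l
    have ccS: "cc n w \<gamma> \<beta> r i (Suc k) l d = Y1 l + Y2 l" if lS: "l \<le> Suc k" for l
    proof -
      have cs: "cc n w \<gamma> \<beta> r i (Suc k) l =
         (if l = 0 then
            hadd (hmul n w \<gamma> (cc n w \<gamma> \<beta> r i k 0) ?Sy)
                 (hsmult \<beta> (hmul n w \<gamma> (hmul n w \<gamma> (yH n w) (cc n w \<gamma> \<beta> r i k 0)) ?Sg))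
          else if l < Suc k then
            hadd (hadd (hmul n w \<gamma> (cc n w \<gamma> \<beta> r i k l) ?Sy)
                       (hsmult (\<beta> * inverse (\<gamma> ^ l)) (hmul n w \<gamma> (hmul n w \<gamma> (yH n w) (cc n w \<gamma> \<beta> r i k l)) ?Sg)))
                 (hmul n w \<gamma> (cc n w \<gamma> \<beta> r i k (l - 1)) ?Sg)
          else if l = Suc k then hmul n w \<gamma> (cc n w \<gamma> \<beta> r i k k) ?Sg
          else hzero)"
        by (simp only: cc.simps Let_def)
      consider (z) "l = 0" | (m) "0 < l" "l \<le> k" | (t) "l = Suc k" using lS by linarith
      then show ?thesis
      proof cases
        case z
        then show ?thesis by (simp add: cs Y1_def Y2_def A1_def A3_def hadd_def hsmult_def)
      next
        case m
        have "cc n w \<gamma> \<beta> r i (Suc k) l d = A3 l + \<beta> * inverse (\<gamma> ^ l) * A1 l + A2 (l - 1)"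
          using m unfolding cs by (simp add: A1_def A2_def A3_def hadd_def hsmult_def)
        then show ?thesis using m by (simp add: Y1_def Y2_def invg)
      next
        case t
        then show ?thesis by (simp add: cs Y1_def Y2_def A2_def)
      qed
    qed
    have "(\<Sum>l\<le>Suc k. sc (cc n w \<gamma> \<beta> r i (Suc k) l d) (U l)) = (\<Sum>l\<le>Suc k. sc (Y1 l) (U l) + sc (Y2 l) (U l))"
      by (rule sum.cong[OF refl]) (simp only: atMost_iff ccS vs.scale_left_distrib)
    also have "\<dots> = (\<Sum>l\<le>Suc k. sc (Y1 l) (U l)) + (\<Sum>l\<le>Suc k. sc (Y2 l) (U l))"
      by (rule sum.distrib)
    also have "(\<Sum>l\<le>Suc k. sc (Y1 l) (U l)) = (\<Sum>l\<le>k. sc (A3 l + \<beta> * Q^l * A1 l) (U l))"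
      by (simp add: Y1_def)
    also have "(\<Sum>l\<le>Suc k. sc (Y2 l) (U l)) = (\<Sum>l\<le>k. sc (A2 l) (U (Suc l)))"
      by (simp only: sum.atMost_Suc_shift) (simp add: Y2_def)
    finally show ?thesis
      by (simp add: vs.scale_left_distrib sum.distrib algebra_simps)
  qed
  finally show ?case .
qed

lemma cc_zero_iff: "l \<le> k \<Longrightarrow> cc n w \<gamma> \<beta> r i k l = hzero \<longleftrightarrow> lam Q (\<beta>*T) k l = 0"
proof -
  assume lk: "l \<le> k"
  have "(\<lambda>d. lam Q (\<beta>*T) k l * Mk k (k-l) d) = hzero \<longleftrightarrow> lam Q (\<beta>*T) k l = 0"
  proof
    assume h: "(\<lambda>d. lam Q (\<beta>*T) k l * Mk k (k-l) d) = hzero"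
    have "\<exists>d. Mk k (k-l) d \<noteq> 0" using Mk_nz[of k "k-l"] by (auto simp: hzero_def fun_eq_iff)
    then obtain d where "Mk k (k-l) d \<noteq> 0" by blast
    moreover have "lam Q (\<beta>*T) k l * Mk k (k-l) d = 0" using fun_cong[OF h, of d] by (simp add: hzero_def)
    ultimately show "lam Q (\<beta>*T) k l = 0" by simp
  qed (simp add: hzero_def)
  then show ?thesis using lk by (simp add: cc_formula)
qed

lemma pow_one_iff: "\<gamma>^m = 1 \<longleftrightarrow> n dvd m"
proof -
  have "\<gamma>^m = \<gamma>^(m mod n + n * (m div n))" by simp
  also have "\<dots> = \<gamma>^(m mod n)" by (rule pow_mod_n[OF g])
  finally have e: "\<gamma>^m = \<gamma>^(m mod n)" .
  show ?thesis
  proof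
    assume "\<gamma>^m = 1"
    then have "\<gamma>^(m mod n) = 1" using e by simp
    moreover have "m mod n < n" using n0 by simp
    ultimately have "m mod n = 0" using prim[of "m mod n"] by (cases "m mod n = 0") auto
    then show "n dvd m" by auto
  next
    assume "n dvd m" then show "\<gamma>^m = 1" using e by simp
  qed
qed

lemma powi_one_iff: "\<gamma> powi z = 1 \<longleftrightarrow> int n dvd z"
proof -
  have z: "z = int n * (z div int n) + z mod int n" by simp
  have "\<gamma> powi z = \<gamma> powi (int n * (z div int n)) * \<gamma> powi (z mod int n)"
    by (subst z, rule power_int_add) (simp add: g_nz)
  also have "\<gamma> powi (int n * (z div int n)) = 1"
    by (simp add: power_int_mult g)
  also have "\<gamma> powi (z mod int n) = \<gamma> ^ nat (z mod int n)"
    using n0 by (simp add: power_int_nonneg_exp)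
  finally have e: "\<gamma> powi z = \<gamma> ^ nat (z mod int n)" by simp
  have "\<gamma> ^ nat (z mod int n) = 1 \<longleftrightarrow> n dvd nat (z mod int n)" by (rule pow_one_iff)
  also have "\<dots> \<longleftrightarrow> z mod int n = 0"
  proof -
    have "0 \<le> z mod int n" "z mod int n < int n" using n0 by simp_all
    then have lt: "nat (z mod int n) < n" by linarith
    show ?thesis
    proof
      assume "n dvd nat (z mod int n)"
      then have "nat (z mod int n) = 0" using lt dvd_imp_le[of n "nat (z mod int n)"] by linarith
      then show "z mod int n = 0" using \<open>0 \<le> z mod int n\<close> by simp
    qed simp
  qed
  finally show ?thesis using e by auto
qed

lemma T_powi: "T = \<gamma> powi i"
proof (cases "0 \<le> i")
  case True then show ?thesis by (simp add: a0_def power_int_nonneg_exp)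
next
  case False
  have "T = Q ^ nat (- i)" using False by (simp add: a0_def power_mult)
  also have "Q = inverse \<gamma>" using gQ by (metis inverse_unique)
  finally show ?thesis using False by (simp add: power_int_def)
qed

lemma Q_powi: "Q^s = \<gamma> powi (- int s)"
proof -
  have "Q = inverse \<gamma>" using gQ by (metis inverse_unique)
  then show ?thesis by (simp add: power_int_minus power_inverse)
qed

lemma cQ_iff:
  assumes "\<beta> = \<gamma> powi j"
  shows "\<beta> * T * Q^s = 1 \<longleftrightarrow> int n dvd (j + i - int s)"
proof -
  have pa: "\<gamma> powi (x + y) = \<gamma> powi x * \<gamma> powi y" for x y
    by (rule power_int_add) (simp add: g_nz)
  have "\<gamma> powi (j + i - int s) = \<gamma> powi ((j + i) + (- int s))" by (simp only: diff_conv_add_uminus)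
  also have "\<dots> = \<gamma> powi j * \<gamma> powi i * \<gamma> powi (- int s)" by (simp only: pa)
  finally have "\<beta> * T * Q^s = \<gamma> powi (j + i - int s)"
    unfolding assms T_powi Q_powi by simp
  then show ?thesis using powi_one_iff by simp
qed

lemma cQ_ne: "\<beta>^n \<noteq> 1 \<Longrightarrow> \<beta> * T * Q^s \<noteq> 1"
proof
  assume b: "\<beta>^n \<noteq> 1" and e: "\<beta> * T * Q^s = 1"
  have "(\<beta> * T * Q^s)^n = \<beta>^n * (\<gamma>^(a0 n i))^n * ((\<gamma>^(n-1))^s)^n"
    by (simp only: power_mult_distrib)
  also have "(\<gamma>^(a0 n i))^n = 1" by (metis g power_mult power_mult_distrib mult.commute power_one)
  also have "((\<gamma>^(n-1))^s)^n = 1" by (metis g power_mult mult.commute power_one)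
  finally have "(\<beta> * T * Q^s)^n = \<beta>^n" by simp
  with e b show False by simp
qed

lemma Hclosed:
  assumes hyp: "\<And>b B'. b \<in> B \<Longrightarrow> U (B' + b) \<in> vs.span (U ` B)"
    and f: "in_H n f" and u: "u \<in> vs.span (U ` B)"
  shows "Hact sc \<rho> f u \<in> vs.span (U ` B)"
  using u H_hom
proof (rule lin_span)
  fix s assume "s \<in> U ` B"
  then obtain b where b: "b \<in> B" "s = U b" by blast
  have "Hact sc \<rho> f (U b) = (\<Sum>p\<in>fsupp f. sc (f p) (\<rho> p (U b)))" by (simp add: Hact_def)
  also have "\<dots> \<in> vs.span (U ` B)"
  proof (rule vs.span_sum)
    fix p assume "p \<in> fsupp f"
    then have "valid_idx n p" using f by (simp add: in_H_def)
    then obtain c where "\<rho> p (U b) = sc c (U (snd (snd p) + b))" using rho_U by blast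
    then show "sc (f p) (\<rho> p (U b)) \<in> vs.span (U ` B)" using hyp[OF b(1)] by (simp add: vs.span_scale)
  qed
  finally show "Hact sc \<rho> f s \<in> vs.span (U ` B)" using b by simp
qed

lemma Dclosed:
  assumes hyp: "\<And>b d. b \<in> B \<Longrightarrow> \<delta> d (U b) \<in> vs.span (U ` B)"
    and u: "u \<in> vs.span (U ` B)"
  shows "\<delta> d u \<in> vs.span (U ` B)"
  using u delta_hom by (rule lin_span) (use hyp in blast)

context
  fixes p :: nat
  assumes simple: "\<And>W. vs.subspace W \<Longrightarrow> (\<forall>f. in_H n f \<longrightarrow> (\<forall>u\<in>W. Hact sc \<rho> f u \<in> W)) \<Longrightarrow> (\<forall>p. \<forall>u\<in>W. \<delta> p u \<in> W) \<Longrightarrow> W = {0} \<or> W = UNIV"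
    and dimp: "vs.dim UNIV = p + 1"
begin

lemma span_all: "vs.span (U ` {..<n}) = UNIV"
proof -
  have H: "\<forall>f. in_H n f \<longrightarrow> (\<forall>u\<in>vs.span (U ` {..<n}). Hact sc \<rho> f u \<in> vs.span (U ` {..<n}))"
    using Hclosed U_in_span by blast
  have D: "\<forall>d. \<forall>u\<in>vs.span (U ` {..<n}). \<delta> d u \<in> vs.span (U ` {..<n})"
  proof (intro allI ballI)
    fix d u assume u: "u \<in> vs.span (U ` {..<n})"
    show "\<delta> d u \<in> vs.span (U ` {..<n})"
    proof (rule Dclosed[OF _ u])
      fix b d assume b: "b \<in> {..<n}"
      show "\<delta> d (U b) \<in> vs.span (U ` {..<n})"
      proof (cases "2 \<le> n")
        case True
        show ?thesis unfolding delta_U[OF True]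
          by (rule vs.span_sum) (simp add: vs.span_scale U_in_span)
      next
        case False
        then have "b = 0" using b n0 by simp
        then show ?thesis using U_in_span[of 0] by (simp add: U0 delta_v vs.span_scale)
      qed
    qed
  qed
  have "vs.span (U ` {..<n}) = {0} \<or> vs.span (U ` {..<n}) = UNIV"
    by (rule simple[OF vs.subspace_span H D])
  moreover have "v \<in> vs.span (U ` {..<n})" using U_in_span[of 0] U0 by simp
  ultimately show ?thesis using v_nz by auto
qed

lemma dim_m:
  assumes m: "m \<le> n" "\<forall>b<m. U b \<noteq> 0" "\<forall>b. m \<le> b \<longrightarrow> b < n \<longrightarrow> U b = 0"
  shows "p + 1 = m"
proof -
  have sub: "U ` {..<n} \<subseteq> vs.span (U ` {..<m})"
  proof
    fix x assume "x \<in> U ` {..<n}"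
    then obtain b where b: "b < n" "x = U b" by blast
    show "x \<in> vs.span (U ` {..<m})"
    proof (cases "b < m")
      case True then show ?thesis using b by (simp add: vs.span_base)
    next
      case False then show ?thesis using b m(3) by (simp add: vs.span_zero)
    qed
  qed
  have sp: "UNIV \<subseteq> vs.span (U ` {..<m})"
    using vs.span_minimal[OF sub vs.subspace_span] span_all by simp
  have "card (U ` {..<m}) = vs.dim UNIV"
    by (rule vs.basis_card_eq_dim[OF subset_UNIV sp U_indep[OF m(1,2)]])
  moreover have "card (U ` {..<m}) = m" using card_image[OF U_inj[OF m(1,2)]] by simp
  ultimately show ?thesis using dimp by simp
qed

lemma case1:
  assumes b: "\<beta>^n \<noteq> 1"
  shows "p = n - 1"
proof -
  have Un: "U n \<noteq> 0" using U_n b v_nz by simp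
  have nz: "\<forall>b<n. U b \<noteq> 0"
  proof (intro allI impI)
    fix b assume "b < n"
    show "U b \<noteq> 0"
    proof
      assume "U b = 0"
      then have "U ((n - b) + b) = 0" by (rule U_zero)
      then show False using Un \<open>b < n\<close> by simp
    qed
  qed
  have "p + 1 = n" by (rule dim_m) (use nz in auto)
  then show ?thesis by simp
qed

lemma cQ_P:
  assumes bj: "\<beta> = \<gamma> powi j" and s: "s < n"
  shows "\<beta> * T * Q^s = 1 \<longleftrightarrow> s = nat ((i + j) mod int n)"
proof -
  have "\<beta> * T * Q^s = 1 \<longleftrightarrow> int n dvd (j + i - int s)" by (rule cQ_iff[OF bj])
  also have "\<dots> \<longleftrightarrow> (j + i) mod int n = int s mod int n" by (simp add: mod_eq_dvd_iff)
  also have "int s mod int n = int s" using s by simp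
  also have "(j + i) mod int n = int s \<longleftrightarrow> s = nat ((i + j) mod int n)"
  proof -
    have "0 \<le> (i + j) mod int n" using n0 by simp
    then show ?thesis by (auto simp: add.commute)
  qed
  finally show ?thesis .
qed

lemma case2:
  assumes b: "\<beta>^n = 1" and bj: "\<beta> = \<gamma> powi j"
  shows "p = nat ((i + j) mod int n)"
proof -
  define P where "P = nat ((i + j) mod int n)"
  have Pn: "P < n" unfolding P_def using n0 by (simp add: nat_less_iff)
  have cQ: "\<And>s. s < n \<Longrightarrow> \<beta> * T * Q^s = 1 \<longleftrightarrow> s = P" unfolding P_def by (rule cQ_P[OF bj])
  have Un0: "U n = 0" using U_n b by simp
  define m where "m = (LEAST b. U b = 0)"
  have Um: "U m = 0" unfolding m_def by (rule LeastI[of _ n]) (rule Un0)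
  have mn: "m \<le> n" unfolding m_def by (rule Least_le) (rule Un0)
  have nz: "\<forall>b<m. U b \<noteq> 0" unfolding m_def using not_less_Least by blast
  have m0: "0 < m"
  proof (rule ccontr)
    assume "\<not> 0 < m"
    then have "m = 0" by simp
    then show False using Um U0 v_nz by simp
  qed
  have zb: "\<forall>b. m \<le> b \<longrightarrow> U b = 0"
  proof (intro allI impI)
    fix b assume "m \<le> b"
    then have "b = (b - m) + m" by simp
    then show "U b = 0" using U_zero[OF Um, of "b - m"] by simp
  qed
  have pm: "p + 1 = m" by (rule dim_m[OF mn nz]) (use zb in blast)
  have ge: "P < m"
  proof (cases "2 \<le> n")
    case False
    then have "n = 1" using n0 by simp
    then show ?thesis using Pn m0 by simp
  next
    case n2: True
    have z: "(\<Sum>l<m. sc (cc n w \<gamma> \<beta> r i m l d) (U l)) = 0" for d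
    proof -
      have "0 = \<delta> d (U m)" using Um module_hom.zero[OF delta_hom] by simp
      also have "\<dots> = (\<Sum>l<Suc m. sc (cc n w \<gamma> \<beta> r i m l d) (U l))"
        unfolding delta_U[OF n2] lessThan_Suc_atMost ..
      also have "\<dots> = (\<Sum>l<m. sc (cc n w \<gamma> \<beta> r i m l d) (U l))" using Um by simp
      finally show ?thesis by simp
    qed
    have "cc n w \<gamma> \<beta> r i m 0 d = 0" for d
      using eig_indep[OF mn nz z[of d]] m0 by blast
    then have "cc n w \<gamma> \<beta> r i m 0 = hzero" by (simp add: hzero_def fun_eq_iff)
    then have "lam Q (\<beta>*T) m 0 = 0" using cc_zero_iff[of 0 m] by simp
    then obtain s where s: "s < m" "\<beta> * T * Q^s = 1" using lam_zero0_iff[OF Q_nz] by blast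
    then have "s = P" using cQ[of s] mn by simp
    then show ?thesis using s by simp
  qed
  have le: "m \<le> P + 1"
  proof (rule ccontr)
    assume "\<not> m \<le> P + 1"
    then have Pm: "P + 1 < m" by simp
    then have n2: "2 \<le> n" using mn by simp
    let ?B = "{P+1..<m}"
    let ?W = "vs.span (U ` ?B)"
    have H: "\<forall>f. in_H n f \<longrightarrow> (\<forall>u\<in>?W. Hact sc \<rho> f u \<in> ?W)"
    proof (intro allI impI ballI)
      fix f :: "'k helt" and u assume f: "in_H n f" and u: "u \<in> ?W"
      show "Hact sc \<rho> f u \<in> ?W"
      proof (rule Hclosed[OF _ f u])
        fix b B' assume b: "b \<in> ?B"
        show "U (B' + b) \<in> ?W"
        proof (cases "B' + b < m")
          case True then show ?thesis using b by (intro vs.span_base) auto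
        next
          case False then show ?thesis using zb vs.span_zero by simp
        qed
      qed
    qed
    have cPQ: "\<beta> * T * Q^P = 1" using cQ[OF Pn] by simp
    have D: "\<forall>d. \<forall>u\<in>?W. \<delta> d u \<in> ?W"
    proof (intro allI ballI)
      fix d u assume u: "u \<in> ?W"
      show "\<delta> d u \<in> ?W"
      proof (rule Dclosed[OF _ u])
        fix b d assume b: "b \<in> ?B"
        show "\<delta> d (U b) \<in> ?W"
          unfolding delta_U[OF n2]
        proof (rule vs.span_sum)
          fix l assume l: "l \<in> {..b}"
          show "sc (cc n w \<gamma> \<beta> r i b l d) (U l) \<in> ?W"
          proof (cases "l \<le> P")
            case True
            have "lam Q (\<beta>*T) b l = 0" by (rule lam_zero_factor[of l P b]) (use True b cPQ in auto)
            then have "cc n w \<gamma> \<beta> r i b l = hzero" using cc_zero_iff[of l b] l by simp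
            then show ?thesis by (simp add: hzero_def vs.span_zero)
          next
            case False
            then have "U l \<in> ?W" using l b by (intro vs.span_base) auto
            then show ?thesis by (rule vs.span_scale)
          qed
        qed
      qed
    qed
    have "?W = {0} \<or> ?W = UNIV" by (rule simple[OF vs.subspace_span H D])
    moreover have "?W \<noteq> {0}"
    proof -
      have "U (P+1) \<in> ?W" using Pm by (intro vs.span_base) auto
      moreover have "U (P+1) \<noteq> 0" using nz Pm by simp
      ultimately show ?thesis by auto
    qed
    moreover have "v \<notin> ?W"
    proof
      assume "v \<in> ?W"
      then have "U 0 \<in> vs.span (U ` {..<m} - {U 0})"
      proof -
        have "U ` ?B \<subseteq> U ` {..<m} - {U 0}"
        proof
          fix x assume "x \<in> U ` ?B"
          then obtain b where b: "b \<in> ?B" "x = U b" by blast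
          have "U b \<noteq> U 0"
          proof
            assume "U b = U 0"
            moreover have "b \<in> {..<m}" "0 \<in> {..<m}" using b m0 by auto
            ultimately have "b = 0" using inj_onD[OF U_inj[OF mn nz]] by blast
            then show False using b by simp
          qed
          then show "x \<in> U ` {..<m} - {U 0}" using b by auto
        qed
        then have "?W \<subseteq> vs.span (U ` {..<m} - {U 0})" by (rule vs.span_mono)
        then show ?thesis using \<open>v \<in> ?W\<close> U0 by auto
      qed
      then have "vs.dependent (U ` {..<m})" unfolding vs.dependent_def using m0 by blast
      then show False using U_indep[OF mn nz] by simp
    qed
    ultimately show False by auto
  qed
  show ?thesis using ge le pm unfolding P_def by simp
qed

lemma main_concl:
  shows "(\<beta> ^ n \<noteq> 1 \<longrightarrow>
            p = n - 1 \<and>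
            (\<forall>k\<le>n. cc n w \<gamma> \<beta> r i k 0 \<noteq> hzero) \<and>
            (\<forall>l. 1 \<le> l \<and> l \<le> n - 1 \<longrightarrow> cc n w \<gamma> \<beta> r i n l = hzero))
       \<and> (\<beta> ^ n = 1 \<longrightarrow>
            (\<forall>j::int. \<beta> = \<gamma> powi j \<longrightarrow>
               int p = int n - phi n (- i - j) \<and>
               (\<forall>k\<le>p. cc n w \<gamma> \<beta> r i k 0 \<noteq> hzero) \<and>
               (\<forall>l\<le>p. cc n w \<gamma> \<beta> r i (p + 1) l = hzero) \<and>
               cc n w \<gamma> \<beta> r i (p + 1) (p + 1) \<noteq> hzero))"
proof (rule conjI; intro impI allI)
  assume b: "\<beta>^n \<noteq> 1"
  show "p = n - 1 \<and>
            (\<forall>k\<le>n. cc n w \<gamma> \<beta> r i k 0 \<noteq> hzero) \<and>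
            (\<forall>l. 1 \<le> l \<and> l \<le> n - 1 \<longrightarrow> cc n w \<gamma> \<beta> r i n l = hzero)"
  proof (intro conjI)
  show "p = n - 1" by (rule case1[OF b])
  show "\<forall>k\<le>n. cc n w \<gamma> \<beta> r i k 0 \<noteq> hzero"
  proof (intro allI impI)
    fix k assume "k \<le> n"
    have "lam Q (\<beta>*T) k 0 \<noteq> 0" using lam_zero0_iff[OF Q_nz] cQ_ne[OF b] by blast
    then show "cc n w \<gamma> \<beta> r i k 0 \<noteq> hzero" using cc_zero_iff[of 0 k] by simp
  qed
  show "\<forall>l. 1 \<le> l \<and> l \<le> n - 1 \<longrightarrow> cc n w \<gamma> \<beta> r i n l = hzero"
  proof (intro allI impI)
    fix l assume l: "1 \<le> l \<and> l \<le> n - 1"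
    have Qn: "Q^n = 1" by (metis g power_mult mult.commute power_one)
    have "qb Q n l = 0" by (rule qb_root[OF Qn Q_prim]) (use l n0 in auto)
    then have "lam Q (\<beta>*T) n l = 0" by (simp add: lam_def)
    moreover have "l \<le> n" using l by linarith
    ultimately show "cc n w \<gamma> \<beta> r i n l = hzero" using cc_zero_iff[of l n] by simp
  qed
  qed
next
  fix j :: int
  assume b: "\<beta>^n = 1" and bj: "\<beta> = \<gamma> powi j"
  define P where "P = nat ((i + j) mod int n)"
  have pP: "p = P" unfolding P_def by (rule case2[OF b bj])
  have Pn: "P < n" unfolding P_def using n0 by (simp add: nat_less_iff)
  have cQ: "\<And>s. s < n \<Longrightarrow> \<beta> * T * Q^s = 1 \<longleftrightarrow> s = P" unfolding P_def by (rule cQ_P[OF bj])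
  show "int p = int n - phi n (- i - j) \<and>
               (\<forall>k\<le>p. cc n w \<gamma> \<beta> r i k 0 \<noteq> hzero) \<and>
               (\<forall>l\<le>p. cc n w \<gamma> \<beta> r i (p + 1) l = hzero) \<and>
               cc n w \<gamma> \<beta> r i (p + 1) (p + 1) \<noteq> hzero"
  proof (intro conjI)
  show "int p = int n - phi n (- i - j)" unfolding P_eq[OF n0] pP P_def using n0 by simp
  show "\<forall>k\<le>p. cc n w \<gamma> \<beta> r i k 0 \<noteq> hzero"
  proof (intro allI impI)
    fix k assume k: "k \<le> p"
    have "lam Q (\<beta>*T) k 0 \<noteq> 0"
    proof
      assume "lam Q (\<beta>*T) k 0 = 0"
      then obtain s where s: "s < k" "\<beta> * T * Q^s = 1" using lam_zero0_iff[OF Q_nz] by blast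
      then have "s = P" using cQ[of s] k pP Pn by simp
      then show False using s k pP by simp
    qed
    then show "cc n w \<gamma> \<beta> r i k 0 \<noteq> hzero" using cc_zero_iff[of 0 k] by simp
  qed
  show "\<forall>l\<le>p. cc n w \<gamma> \<beta> r i (p + 1) l = hzero"
  proof (intro allI impI)
    fix l assume l: "l \<le> p"
    have "lam Q (\<beta>*T) (p+1) l = 0" by (rule lam_zero_factor[of l P]) (use l pP cQ[OF Pn] in auto)
    then show "cc n w \<gamma> \<beta> r i (p + 1) l = hzero" using cc_zero_iff[of l "p+1"] l by simp
  qed
  show "cc n w \<gamma> \<beta> r i (p + 1) (p + 1) \<noteq> hzero" using cc_zero_iff[of "p+1" "p+1"] by (simp add: lam_diag)
  qed
qed

end

end


theorem proposition3p19:
  fixes n w :: nat and \<gamma> \<alpha> \<beta> :: "'k::field_char_0"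
    and sc :: "'k \<Rightarrow> 'v::ab_group_add \<Rightarrow> 'v" and \<rho> \<delta> :: "idx \<Rightarrow> 'v \<Rightarrow> 'v"
    and v :: 'v and p :: nat and r i :: int
  assumes "alg_closed_field TYPE('k)"
    and "0 < n" and "0 < w" and "primitive_root n \<gamma>"
    and "YD_simple n w \<gamma> sc \<rho> \<delta>"
    and "vector_space.dim sc (UNIV :: 'v set) = p + 1"
    and "standard_elem n w \<gamma> sc \<rho> \<delta> v \<alpha> \<beta> (xgH n w \<gamma> r i)"
  shows "(\<beta> ^ n \<noteq> 1 \<longrightarrow>
            p = n - 1 \<and>
            (\<forall>k\<le>n. cc n w \<gamma> \<beta> r i k 0 \<noteq> hzero) \<and>
            (\<forall>l. 1 \<le> l \<and> l \<le> n - 1 \<longrightarrow> cc n w \<gamma> \<beta> r i n l = hzero))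
       \<and> (\<beta> ^ n = 1 \<longrightarrow>
            (\<forall>j::int. \<beta> = \<gamma> powi j \<longrightarrow>
               int p = int n - phi n (- i - j) \<and>
               (\<forall>k\<le>p. cc n w \<gamma> \<beta> r i k 0 \<noteq> hzero) \<and>
               (\<forall>l\<le>p. cc n w \<gamma> \<beta> r i (p + 1) l = hzero) \<and>
               cc n w \<gamma> \<beta> r i (p + 1) (p + 1) \<noteq> hzero))"
proof -
  note a = assms
  have YD: "YD_module n w \<gamma> sc \<rho> \<delta>" using a(5) by (simp add: YD_simple_def)
  have g: "\<gamma>^n = 1" and prim: "\<And>l. 0 < l \<Longrightarrow> l < n \<Longrightarrow> \<gamma>^l \<noteq> 1"
    using a(4) by (auto simp: primitive_root_def)
  interpret Y: yd n w \<gamma> \<beta> r i sc \<rho> \<delta> v \<alpha>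
    by unfold_locales (use a(2,3,7) YD g prim in auto)
  have simple: "\<And>W. Y.vs.subspace W \<Longrightarrow> (\<forall>f. in_H n f \<longrightarrow> (\<forall>u\<in>W. Hact sc \<rho> f u \<in> W)) \<Longrightarrow> (\<forall>p. \<forall>u\<in>W. \<delta> p u \<in> W) \<Longrightarrow> W = {0} \<or> W = UNIV"
    using a(5) unfolding YD_simple_def by blast
  show ?thesis by (rule Y.main_concl[OF simple a(6)])
qed

end
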